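(* Let $G$ be a planar graph with a fixed embedding in the plane, $u,v\in V(G)$, and let $P$ and $Q$ be internally disjoint $(u,v)$-paths in $G$. Suppose that $P$ is isometric and bypath-free in $H=G[R(P,Q)\cup V(P)\cup V(Q)]$, and that $Q$ is isometric in $H_Q=G[R(P,Q)\cup V(Q)]$. Then either $Q$ is bypath-free in $H_Q$, or there exists a bypath $B$ of $Q$ in $H_Q$ such that: (i) $P$ is isometric and bypath-free in $G[R(P,Q_{\langle B\rangle})\cup V(P)\cup V(Q_{\langle B\rangle})]$; (ii) $Q$ is isometric and bypath-free in $G[R(Q,Q_{\langle B\rangle})\cup V(Q)]$; (iii) $Q_{\langle B\rangle}$ is isometric in $G[R(P,Q_{\langle B\rangle})\cup V(Q_{\langle B\rangle})]$, and is isometric and bypath-free in $G[R(Q,Q_{\langle B\rangle})\cup V(Q_{\langle B\rangle})]$.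
   Context: For two internally disjoint paths $P,Q$ with the same endpoints in the embedded planar graph $G$, $R(P,Q)$ denotes the set of vertices of $G$ lying in the interior of the disk bounded by the closed curve $P\cup Q$. A path $P$ in a graph $H$ is isometric in $H$ if $d_P(x,y)=d_H(x,y)$ for all $x,y\in V(P)$. For a graph $H$ and an isometric path $P=v_1\cdots v_k$ in $H$, a bypath of $P$ in $H$ is a path $B=b_1\cdots b_t$ with $t\ge3$, $V(B)\subseteq V(H)$, $b_1=v_i$, $b_t=v_j$ for some $i<j$ (the branching vertices), $V(B)\cap V(P)=\{v_i,v_j\}$, and such that $v_1\cdots v_ib_2\cdots b_{t-1}v_j\cdots v_k$ is also an isometric path in $H$; this path (obtained from $P$ by replacing its subpath between $v_i$ and $v_j$ by $B$) is denoted $P_{\langle B\rangle}$. $P$ is bypath-free in $H$ if $H$ contains no bypath of $P$. $G[X]$ is the subgraph induced by $X$. *)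

theory Defs
  imports "HOL-Analysis.Analysis"
begin

text \<open>A finite simple graph on vertex set V with symmetric irreflexive adjacency E,
 together with a fixed plane embedding: vertices are placed at distinct points pos v of
 the plane (complex numbers) and every edge xy is drawn as an drw (drw x y) from pos x to
 pos y; arcs avoid other vertices and distinct edges meet only in common endpoints.\<close>

definition plane_graph ::
  "'v set \<Rightarrow> ('v \<Rightarrow> 'v \<Rightarrow> bool) \<Rightarrow> ('v \<Rightarrow> complex) \<Rightarrow> ('v \<Rightarrow> 'v \<Rightarrow> real \<Rightarrow> complex) \<Rightarrow> bool"
where
  "plane_graph V E pos drw \<longleftrightarrow>
     finite V \<and>
     (\<forall>x y. E x y \<longrightarrow> x \<in> V \<and> y \<in> V \<and> x \<noteq> y \<and> E y x) \<and>
     inj_on pos V \<and>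
     (\<forall>x y. E x y \<longrightarrow>
        Path_Connected.arc (drw x y) \<and> pathstart (drw x y) = pos x \<and>
        pathfinish (drw x y) = pos y \<and> drw y x = reversepath (drw x y) \<and>
        path_image (drw x y) \<inter> pos ` V \<subseteq> {pos x, pos y}) \<and>
     (\<forall>x y x' y'. E x y \<and> E x' y' \<and> {x, y} \<noteq> {x', y'} \<longrightarrow>
        path_image (drw x y) \<inter> path_image (drw x' y') \<subseteq> pos ` ({x, y} \<inter> {x', y'}))"

definition gpath :: "'v set \<Rightarrow> ('v \<Rightarrow> 'v \<Rightarrow> bool) \<Rightarrow> 'v list \<Rightarrow> bool" where
  "gpath V E p \<longleftrightarrow> p \<noteq> [] \<and> distinct p \<and> set p \<subseteq> V \<and>
     (\<forall>i. Suc i < length p \<longrightarrow> E (p ! i) (p ! Suc i))"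

fun pcurve :: "('v \<Rightarrow> complex) \<Rightarrow> ('v \<Rightarrow> 'v \<Rightarrow> real \<Rightarrow> complex) \<Rightarrow> 'v list \<Rightarrow> real \<Rightarrow> complex" where
  "pcurve pos drw [] = linepath 0 0"
| "pcurve pos drw [x] = linepath (pos x) (pos x)"
| "pcurve pos drw (x # y # rest) = drw x y +++ pcurve pos drw (y # rest)"

definition region ::
  "'v set \<Rightarrow> ('v \<Rightarrow> complex) \<Rightarrow> ('v \<Rightarrow> 'v \<Rightarrow> real \<Rightarrow> complex) \<Rightarrow> 'v list \<Rightarrow> 'v list \<Rightarrow> 'v set"
where
  "region V pos drw P Q =
     {x \<in> V. pos x \<in> inside (path_image (pcurve pos drw P) \<union> path_image (pcurve pos drw Q))}"

definition walk_in :: "('v \<Rightarrow> 'v \<Rightarrow> bool) \<Rightarrow> 'v set \<Rightarrow> 'v list \<Rightarrow> bool" where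
  "walk_in E X w \<longleftrightarrow> w \<noteq> [] \<and> set w \<subseteq> X \<and>
     (\<forall>i. Suc i < length w \<longrightarrow> E (w ! i) (w ! Suc i))"

definition dist_in :: "('v \<Rightarrow> 'v \<Rightarrow> bool) \<Rightarrow> 'v set \<Rightarrow> 'v \<Rightarrow> 'v \<Rightarrow> nat" where
  "dist_in E X x y =
     (LEAST n. \<exists>w. walk_in E X w \<and> hd w = x \<and> last w = y \<and> length w = Suc n)"

definition isometric :: "'v set \<Rightarrow> ('v \<Rightarrow> 'v \<Rightarrow> bool) \<Rightarrow> 'v set \<Rightarrow> 'v list \<Rightarrow> bool" where
  "isometric V E X P \<longleftrightarrow> gpath V E P \<and> set P \<subseteq> X \<and>
     (\<forall>i j. i < length P \<longrightarrow> j < length P \<longrightarrow>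
        dist_in E X (P ! i) (P ! j) = (if i \<le> j then j - i else i - j))"

definition replace_sub :: "'v list \<Rightarrow> nat \<Rightarrow> nat \<Rightarrow> 'v list \<Rightarrow> 'v list" where
  "replace_sub P i j B = take i P @ B @ drop (Suc j) P"

definition bypath :: "'v set \<Rightarrow> ('v \<Rightarrow> 'v \<Rightarrow> bool) \<Rightarrow> 'v set \<Rightarrow> 'v list \<Rightarrow> 'v list \<Rightarrow> nat \<Rightarrow> nat \<Rightarrow> bool" where
  "bypath V E X P B i j \<longleftrightarrow>
     gpath V E B \<and> length B \<ge> 3 \<and> set B \<subseteq> X \<and>
     i < j \<and> j < length P \<and> hd B = P ! i \<and> last B = P ! j \<and>
     set B \<inter> set P = {P ! i, P ! j} \<and>
     isometric V E X (replace_sub P i j B)"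

definition bypath_free :: "'v set \<Rightarrow> ('v \<Rightarrow> 'v \<Rightarrow> bool) \<Rightarrow> 'v set \<Rightarrow> 'v list \<Rightarrow> bool" where
  "bypath_free V E X P \<longleftrightarrow> \<not> (\<exists>B i j. bypath V E X P B i j)"

end

theory Submission
  imports Defs
begin
lemma gpath_succ: "gpath V E p \<longleftrightarrow> p \<noteq> [] \<and> distinct p \<and> set p \<subseteq> V \<and> successively E p"
  by (simp add: gpath_def successively_conv_nth)

lemma walk_succ: "walk_in E X w \<longleftrightarrow> w \<noteq> [] \<and> set w \<subseteq> X \<and> successively E w"
  by (simp add: walk_in_def successively_conv_nth)

definition symE :: "('v \<Rightarrow> 'v \<Rightarrow> bool) \<Rightarrow> bool" where
  "symE E \<longleftrightarrow> (\<forall>x y. E x y \<longrightarrow> E y x)"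

lemma successively_take: "successively P xs \<Longrightarrow> successively P (take k xs)"
  by (metis append_take_drop_id successively_append_iff)

lemma successively_drop: "successively P xs \<Longrightarrow> successively P (drop k xs)"
  by (metis append_take_drop_id successively_append_iff)

lemma dist_le:
  assumes "walk_in E X w" "hd w = x" "last w = y"
  shows "dist_in E X x y \<le> length w - 1"
  unfolding dist_in_def
  apply (rule Least_le)
  using assms by (intro exI[of _ w]) (auto simp: walk_in_def)

lemma dist_ex:
  assumes "walk_in E X w" "hd w = x" "last w = y"
  shows "\<exists>w'. walk_in E X w' \<and> hd w' = x \<and> last w' = y \<and> length w' = Suc (dist_in E X x y)"
  unfolding dist_in_def
  apply (rule LeastI_ex)
  using assms by (intro exI[of _ "length w - 1"] exI[of _ w]) (auto simp: walk_in_def)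

lemma walk_rev:
  assumes "symE E" "walk_in E X w"
  shows "walk_in E X (rev w)"
proof -
  have "successively E w" using assms(2) by (simp add: walk_succ)
  then have "successively (\<lambda>x y. E y x) w"
    using assms(1) unfolding symE_def by (metis (no_types, lifting) successively_mono)
  then have "successively E (rev w)" by (simp add: successively_rev)
  then show ?thesis using assms(2) by (simp add: walk_succ)
qed

lemma dist_sym:
  assumes "symE E"
  shows "dist_in E X x y = dist_in E X y x"
proof -
  have "(\<exists>w. walk_in E X w \<and> hd w = x \<and> last w = y \<and> length w = Suc n) \<longleftrightarrow>
        (\<exists>w. walk_in E X w \<and> hd w = y \<and> last w = x \<and> length w = Suc n)" for x y n
  proof -
    have *: "\<exists>w. walk_in E X w \<and> hd w = b \<and> last w = a \<and> length w = Suc n"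
      if "walk_in E X w" "hd w = a" "last w = b" "length w = Suc n" for a b w
      using that walk_rev[OF assms that(1)]
      by (intro exI[of _ "rev w"]) (auto simp: walk_in_def hd_rev last_rev)
    show ?thesis using * by blast
  qed
  then show ?thesis unfolding dist_in_def by simp
qed

lemma walk_join:
  assumes "walk_in E X w1" "walk_in E X w2" "last w1 = hd w2"
  shows "walk_in E X (w1 @ tl w2) \<and> hd (w1 @ tl w2) = hd w1 \<and> last (w1 @ tl w2) = last w2
     \<and> length (w1 @ tl w2) = length w1 + length w2 - 1"
proof -
  obtain h t where w2: "w2 = h # t" using assms(2) by (cases w2) (auto simp: walk_in_def)
  have s1: "successively E w1" and s2: "successively E (h # t)"
    using assms w2 by (auto simp: walk_succ)
  have "successively E (w1 @ t)"
    using s1 s2 assms(3) w2 by (cases t) (auto simp: successively_append_iff)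
  then show ?thesis using assms w2 by (auto simp: walk_succ)
qed

lemma dist_triangle:
  assumes "walk_in E X w1" "hd w1 = x" "last w1 = y"
    and "walk_in E X w2" "hd w2 = y" "last w2 = z"
  shows "dist_in E X x z \<le> dist_in E X x y + dist_in E X y z"
proof -
  obtain a where a: "walk_in E X a" "hd a = x" "last a = y" "length a = Suc (dist_in E X x y)"
    using dist_ex[OF assms(1-3)] by blast
  obtain b where b: "walk_in E X b" "hd b = y" "last b = z" "length b = Suc (dist_in E X y z)"
    using dist_ex[OF assms(4-6)] by blast
  have j: "walk_in E X (a @ tl b) \<and> hd (a @ tl b) = hd a \<and> last (a @ tl b) = last b
     \<and> length (a @ tl b) = length a + length b - 1"
    using walk_join[OF a(1) b(1)] a b by simp
  show ?thesis using dist_le[of E X "a @ tl b" x z] j a b by simp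
qed

lemma seg_walk:
  assumes "gpath V E Y" "set Y \<subseteq> X" "i \<le> j" "j < length Y"
  shows "walk_in E X (drop i (take (Suc j) Y)) \<and> hd (drop i (take (Suc j) Y)) = Y ! i
    \<and> last (drop i (take (Suc j) Y)) = Y ! j \<and> length (drop i (take (Suc j) Y)) = Suc (j - i)"
proof -
  let ?s = "drop i (take (Suc j) Y)"
  have len: "length ?s = Suc (j - i)" using assms by simp
  have "successively E Y" using assms(1) by (simp add: gpath_succ)
  then have "successively E ?s" by (simp add: successively_take successively_drop)
  moreover have "set ?s \<subseteq> X" using assms(2)
    by (meson in_set_dropD in_set_takeD subset_code(1))
  moreover have "?s \<noteq> []" using len by auto
  moreover have "hd ?s = Y ! i" using assms len by (simp add: hd_drop_conv_nth)
  moreover have "last ?s = Y ! j" using assms len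
    by (simp add: last_conv_nth nth_take) 
  ultimately show ?thesis using len by (simp add: walk_succ)
qed

lemma dist_path_le:
  assumes "symE E" "gpath V E Y" "set Y \<subseteq> X" "i < length Y" "j < length Y"
  shows "dist_in E X (Y ! i) (Y ! j) \<le> (if i \<le> j then j - i else i - j)"
proof (cases "i \<le> j")
  case True
  then show ?thesis using seg_walk[OF assms(2,3) True assms(5)] dist_le[of E X] by fastforce
next
  case False
  then have "dist_in E X (Y ! j) (Y ! i) \<le> i - j"
    using seg_walk[OF assms(2,3), of j i] assms dist_le[of E X] by fastforce
  then show ?thesis using False dist_sym[OF assms(1)] by simp
qed

lemma geo_iso:
  assumes "symE E" "gpath V E Y" "set Y \<subseteq> X" "length Y - 1 \<le> dist_in E X (hd Y) (last Y)"
  shows "isometric V E X Y"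
proof -
  let ?n = "length Y"
  have ne: "Y \<noteq> []" using assms(2) by (simp add: gpath_def)
  have hd: "hd Y = Y ! 0" using ne by (simp add: hd_conv_nth)
  have lst: "last Y = Y ! (?n - 1)" using ne by (simp add: last_conv_nth)
  have ge: "dist_in E X (Y ! i) (Y ! j) \<ge> j - i" if ij: "i \<le> j" "j < ?n" for i j
  proof -
    let ?w1 = "drop 0 (take (Suc i) Y)" and ?w2 = "drop i (take (Suc j) Y)"
      and ?w3 = "drop j (take (Suc (?n - 1)) Y)" and ?w4 = "drop 0 (take (Suc j) Y)"
    have w1: "walk_in E X ?w1" "hd ?w1 = Y ! 0" "last ?w1 = Y ! i"
      using seg_walk[OF assms(2,3), of 0 i] ij by (simp_all del: drop_0)
    have w2: "walk_in E X ?w2" "hd ?w2 = Y ! i" "last ?w2 = Y ! j"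
      using seg_walk[OF assms(2,3), of i j] ij by (simp_all del: drop_0)
    have w3: "walk_in E X ?w3" "hd ?w3 = Y ! j" "last ?w3 = Y ! (?n - 1)"
      using seg_walk[OF assms(2,3), of j "?n - 1"] ij by (simp_all del: drop_0)
    have w4: "walk_in E X ?w4" "hd ?w4 = Y ! 0" "last ?w4 = Y ! j"
      using seg_walk[OF assms(2,3), of 0 j] ij by (simp_all del: drop_0)
    have t1: "dist_in E X (Y ! 0) (Y ! (?n - 1)) \<le> dist_in E X (Y ! 0) (Y ! j) + dist_in E X (Y ! j) (Y ! (?n - 1))"
      by (rule dist_triangle[OF w4 w3])
    have t2: "dist_in E X (Y ! 0) (Y ! j) \<le> dist_in E X (Y ! 0) (Y ! i) + dist_in E X (Y ! i) (Y ! j)"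
      by (rule dist_triangle[OF w1 w2])
    have t3: "dist_in E X (Y ! 0) (Y ! i) \<le> i"
      using dist_path_le[OF assms(1-3), of 0 i] ij ne by simp
    have t4: "dist_in E X (Y ! j) (Y ! (?n - 1)) \<le> ?n - 1 - j"
      using dist_path_le[OF assms(1-3), of j "?n - 1"] ij ne by (simp split: if_splits)
    have t0: "?n - 1 \<le> dist_in E X (Y ! 0) (Y ! (?n - 1))" using assms(4) hd lst by simp
    show ?thesis using t0 t1 t2 t3 t4 ij by linarith
  qed
  have "dist_in E X (Y ! i) (Y ! j) = (if i \<le> j then j - i else i - j)" if "i < ?n" "j < ?n" for i j
  proof (cases "i \<le> j")
    case True
    then show ?thesis using ge[of i j] dist_path_le[OF assms(1-3) that] that by simp
  next
    case False
    then show ?thesis using ge[of j i] dist_path_le[OF assms(1-3) that] that dist_sym[OF assms(1)] by simp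
  qed
  then show ?thesis using assms unfolding isometric_def by blast
qed

lemma iso_dist:
  assumes "isometric V E X Y"
  shows "dist_in E X (hd Y) (last Y) = length Y - 1"
proof -
  have ne: "Y \<noteq> []" using assms by (simp add: isometric_def gpath_def)
  have "dist_in E X (Y ! 0) (Y ! (length Y - 1)) = (if 0 \<le> length Y - 1 then length Y - 1 - 0 else 0 - (length Y - 1))"
    using assms ne unfolding isometric_def by (meson diff_less length_greater_0_conv less_one)
  then show ?thesis using ne by (simp add: hd_conv_nth last_conv_nth)
qed

lemma iso_walk: "isometric V E X Y \<Longrightarrow> walk_in E X Y"
  by (auto simp: isometric_def gpath_def walk_in_def)

lemma dist_mono:
  assumes "X' \<subseteq> X" "walk_in E X' w" "hd w = x" "last w = y"
  shows "dist_in E X x y \<le> dist_in E X' x y"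
proof -
  obtain w' where w': "walk_in E X' w'" "hd w' = x" "last w' = y" "length w' = Suc (dist_in E X' x y)"
    using dist_ex[OF assms(2-4)] by blast
  then have "walk_in E X w'" using assms(1) by (auto simp: walk_in_def)
  then show ?thesis using dist_le[of E X w' x y] w' by simp
qed

lemma iso_mono:
  assumes "symE E" "isometric V E X Y" "set Y \<subseteq> X'" "X' \<subseteq> X"
  shows "isometric V E X' Y"
proof (rule geo_iso[OF assms(1)])
  show "gpath V E Y" using assms(2) by (simp add: isometric_def)
  show "set Y \<subseteq> X'" by fact
  have "walk_in E X' Y" using assms(2,3) by (auto simp: isometric_def gpath_def walk_in_def)
  then show "length Y - 1 \<le> dist_in E X' (hd Y) (last Y)"
    using dist_mono[OF assms(4)] iso_dist[OF assms(2)] by fastforce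
qed

fun ep :: "'a list \<Rightarrow> ('a \<times> 'a) set" where
  "ep (x # y # r) = insert (x, y) (ep (y # r))"
| "ep _ = {}"

lemma ep_Cons: "ep (x # ys) = (if ys = [] then {} else insert (x, hd ys) (ep ys))"
  by (cases ys) auto

lemma ep_append: "ep (xs @ ys) = ep xs \<union> ep ys \<union> (if xs \<noteq> [] \<and> ys \<noteq> [] then {(last xs, hd ys)} else {})"
proof (induction xs)
  case Nil
  then show ?case by simp
next
  case (Cons x xs)
  then show ?case by (cases xs) (auto simp: ep_Cons)
qed

lemma ep_nth: "(a, b) \<in> ep L \<longleftrightarrow> (\<exists>k. Suc k < length L \<and> a = L ! k \<and> b = L ! Suc k)"
proof (induction L rule: ep.induct)
  case (1 x y r)
  show ?case
  proof
    assume "(a, b) \<in> ep (x # y # r)"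
    then consider "(a, b) = (x, y)" | "(a, b) \<in> ep (y # r)" by auto
    then show "\<exists>k. Suc k < length (x # y # r) \<and> a = (x # y # r) ! k \<and> b = (x # y # r) ! Suc k"
    proof cases
      case 1 then show ?thesis by (intro exI[of _ 0]) auto
    next
      case 2
      then obtain k where "Suc k < length (y # r)" "a = (y # r) ! k" "b = (y # r) ! Suc k"
        using "1.IH" by blast
      then show ?thesis by (intro exI[of _ "Suc k"]) auto
    qed
  next
    assume "\<exists>k. Suc k < length (x # y # r) \<and> a = (x # y # r) ! k \<and> b = (x # y # r) ! Suc k"
    then obtain k where k: "Suc k < length (x # y # r)" "a = (x # y # r) ! k" "b = (x # y # r) ! Suc k"
      by blast
    show "(a, b) \<in> ep (x # y # r)"
    proof (cases k)
      case 0 then show ?thesis using k by simp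
    next
      case (Suc k')
      then have "(a, b) \<in> ep (y # r)" using "1.IH" k by auto
      then show ?thesis by simp
    qed
  qed
qed auto

lemma succ_ep: "successively P L \<longleftrightarrow> (\<forall>(a, b)\<in>ep L. P a b)"
  by (induction L rule: ep.induct) auto

lemma ep_set: "(a, b) \<in> ep L \<Longrightarrow> a \<in> set L \<and> b \<in> set L"
  by (induction L rule: ep.induct) auto

lemma ep_take: "ep (take k L) \<subseteq> ep L"
  using ep_append[of "take k L" "drop k L"] by auto

lemma ep_drop: "ep (drop k L) \<subseteq> ep L"
  using ep_append[of "take k L" "drop k L"] by auto

lemma ep_seg: "ep (drop a (take b L)) \<subseteq> ep L"
  using ep_take ep_drop by blast

lemma in_take_nth: "x \<in> set (take i Q) \<longleftrightarrow> (\<exists>k. k < i \<and> k < length Q \<and> x = Q ! k)"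
  by (auto simp: in_set_conv_nth)

lemma in_drop_nth: "x \<in> set (drop i Q) \<longleftrightarrow> (\<exists>k. i \<le> k \<and> k < length Q \<and> x = Q ! k)"
  apply (auto simp: in_set_conv_nth)
  apply (metis add.commute le_add2 less_diff_conv)
  by (metis add_diff_inverse_nat diff_less_mono not_less)

lemma last_take_nth: "0 < i \<Longrightarrow> i \<le> length Q \<Longrightarrow> last (take i Q) = Q ! (i - 1)"
proof -
  assume a: "0 < i" "i \<le> length Q"
  then have "take i Q = take (i - 1) Q @ [Q ! (i - 1)]"
    by (metis Suc_diff_1 Suc_le_lessD take_Suc_conv_app_nth)
  then show ?thesis by simp
qed

lemma set_rs: "set (replace_sub Q i j B) = set (take i Q) \<union> set B \<union> set (drop (Suc j) Q)"
  by (auto simp: replace_sub_def)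

lemma len_rs: "i < j \<Longrightarrow> j < length Q \<Longrightarrow> length (replace_sub Q i j B) = i + length B + (length Q - Suc j)"
  by (simp add: replace_sub_def)

lemma hd_rs:
  assumes "i < j" "j < length Q" "B \<noteq> []" "hd B = Q ! i"
  shows "hd (replace_sub Q i j B) = hd Q"
proof (cases i)
  case 0
  then have "hd (replace_sub Q i j B) = hd B" using assms by (simp add: replace_sub_def)
  moreover have "Q \<noteq> []" using assms by auto
  ultimately show ?thesis using assms 0 by (simp add: hd_conv_nth)
next
  case (Suc k)
  then have "take i Q \<noteq> []" using assms by auto
  then show ?thesis using assms by (simp add: replace_sub_def)
qed

lemma last_rs:
  assumes "i < j" "j < length Q" "B \<noteq> []" "last B = Q ! j"
  shows "last (replace_sub Q i j B) = last Q"
proof (cases "Suc j = length Q")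
  case True
  then have "last (replace_sub Q i j B) = last B" using assms by (simp add: replace_sub_def)
  moreover have "Q \<noteq> []" using assms by auto
  moreover have "length Q - Suc 0 = j" using True by simp
  ultimately show ?thesis using assms True by (simp add: last_conv_nth)
next
  case False then show ?thesis using assms by (simp add: replace_sub_def)
qed

lemma ep_rs:
  assumes "i < j" "j < length Q" "B \<noteq> []" "hd B = Q ! i" "last B = Q ! j"
  shows "ep (replace_sub Q i j B) \<subseteq> ep Q \<union> ep B"
proof -
  have j1: "(last (take i Q), hd B) \<in> ep Q" if "i > 0"
  proof -
    have "last (take i Q) = Q ! (i - 1)" using that assms by (simp add: last_take_nth)
    then show ?thesis using that assms by (auto simp: ep_nth intro!: exI[of _ "i - 1"])
  qed
  have j2: "(last B, hd (drop (Suc j) Q)) \<in> ep Q" if "drop (Suc j) Q \<noteq> []"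
  proof -
    have "hd (drop (Suc j) Q) = Q ! Suc j" using that assms by (simp add: hd_drop_conv_nth)
    then show ?thesis using that assms by (auto simp: ep_nth intro!: exI[of _ j])
  qed
  show ?thesis
    unfolding replace_sub_def ep_append
    using ep_take[of i Q] ep_drop[of "Suc j" Q] j1 j2 assms(3) by (auto split: if_splits)
qed

lemma ep_B_rs: "ep B \<subseteq> ep (replace_sub Q i j B)"
  unfolding replace_sub_def ep_append by auto

lemma rs_gpath:
  assumes Q: "gpath V E Q" and B: "gpath V E B" and ij: "i < j" "j < length Q"
    and hb: "hd B = Q ! i" and lb: "last B = Q ! j" and BQ: "set B \<inter> set Q \<subseteq> {Q ! i, Q ! j}"
  shows "gpath V E (replace_sub Q i j B)"
proof -
  have dQ: "distinct Q" and sQ: "successively E Q" and vQ: "set Q \<subseteq> V"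
    using Q by (auto simp: gpath_succ)
  have dB: "distinct B" and sB: "successively E B" and vB: "set B \<subseteq> V" and neB: "B \<noteq> []"
    using B by (auto simp: gpath_succ)
  have idx: "k = k'" if "k < length Q" "k' < length Q" "Q ! k = Q ! k'" for k k'
    using dQ that nth_eq_iff_index_eq by blast
  have d1: "set (take i Q) \<inter> set B = {}"
  proof (rule ccontr)
    assume "set (take i Q) \<inter> set B \<noteq> {}"
    then obtain x where x: "x \<in> set (take i Q)" "x \<in> set B" by blast
    then obtain k where k: "k < i" "k < length Q" "x = Q ! k" by (auto simp: in_take_nth)
    then have "x \<in> {Q ! i, Q ! j}" using x BQ by auto
    then show False using idx[of k i] idx[of k j] k ij by auto
  qed
  have d2: "set (drop (Suc j) Q) \<inter> set B = {}"
  proof (rule ccontr)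
    assume "set (drop (Suc j) Q) \<inter> set B \<noteq> {}"
    then obtain x where x: "x \<in> set (drop (Suc j) Q)" "x \<in> set B" by blast
    then obtain k where k: "Suc j \<le> k" "k < length Q" "x = Q ! k" by (auto simp: in_drop_nth)
    then have "x \<in> {Q ! i, Q ! j}" using x BQ by auto
    then show False using idx[of k i] idx[of k j] k ij by auto
  qed
  have d3: "set (take i Q) \<inter> set (drop (Suc j) Q) = {}"
  proof (rule ccontr)
    assume "set (take i Q) \<inter> set (drop (Suc j) Q) \<noteq> {}"
    then obtain x where x: "x \<in> set (take i Q)" "x \<in> set (drop (Suc j) Q)" by blast
    then obtain k k' where "k < i" "k < length Q" "x = Q ! k" "Suc j \<le> k'" "k' < length Q" "x = Q ! k'"
      by (auto simp: in_take_nth in_drop_nth)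
    then show False using idx[of k k'] ij by auto
  qed
  have dist: "distinct (replace_sub Q i j B)"
    unfolding replace_sub_def using dQ dB d1 d2 d3 by auto
  have junc1: "E (last (take i Q)) (hd B)" if "take i Q \<noteq> []"
  proof -
    have "i > 0" using that by auto
    then have "last (take i Q) = Q ! (i - 1)" using ij by (simp add: last_take_nth)
    then show ?thesis using successively_nth[OF sQ, of "i - 1"] hb \<open>i > 0\<close> ij by auto
  qed
  have junc2: "E (last B) (hd (drop (Suc j) Q))" if "drop (Suc j) Q \<noteq> []"
  proof -
    have "hd (drop (Suc j) Q) = Q ! Suc j" using that by (simp add: hd_drop_conv_nth)
    then show ?thesis using successively_nth[OF sQ, of j] lb that by auto
  qed
  have succ: "successively E (replace_sub Q i j B)"
    unfolding replace_sub_def successively_append_iff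
    using successively_take[OF sQ] successively_drop[OF sQ] sB junc1 junc2 neB by auto
  have "set (replace_sub Q i j B) \<subseteq> V" using vQ vB unfolding set_rs
    by (meson in_set_dropD in_set_takeD le_sup_iff subset_code(1))
  moreover have "replace_sub Q i j B \<noteq> []" using neB by (simp add: replace_sub_def)
  ultimately show ?thesis using dist succ by (simp add: gpath_succ)
qed

lemma iso_idx:
  assumes "isometric V E X Y" "isometric V E X Q" "hd Y = hd Q" "k < length Y" "m < length Q" "Y ! k = Q ! m"
  shows "k = m"
proof -
  have neY: "Y \<noteq> []" and neQ: "Q \<noteq> []" using assms by (auto simp: isometric_def gpath_def)
  have HY: "\<And>i j. i < length Y \<Longrightarrow> j < length Y \<Longrightarrow> dist_in E X (Y ! i) (Y ! j) = (if i \<le> j then j - i else i - j)"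
    using assms(1) by (auto simp: isometric_def)
  have HQ: "\<And>i j. i < length Q \<Longrightarrow> j < length Q \<Longrightarrow> dist_in E X (Q ! i) (Q ! j) = (if i \<le> j then j - i else i - j)"
    using assms(2) by (auto simp: isometric_def)
  have "dist_in E X (Y ! 0) (Y ! k) = k" using HY[of 0 k] assms(4) neY by simp
  moreover have "dist_in E X (Q ! 0) (Q ! m) = m" using HQ[of 0 m] assms(5) neQ by simp
  moreover have "Y ! 0 = Q ! 0" using assms(3) neY neQ by (simp add: hd_conv_nth)
  ultimately show ?thesis using assms(6) by simp
qed

lemma iso_len:
  assumes "isometric V E X Y" "isometric V E X Q" "hd Y = hd Q" "last Y = last Q"
  shows "length Y = length Q"
proof -
  have neY: "Y \<noteq> []" and neQ: "Q \<noteq> []" using assms by (auto simp: isometric_def gpath_def)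
  have "length Y - 1 = length Q - 1" using iso_dist[OF assms(1)] iso_dist[OF assms(2)] assms(3,4) by simp
  then show ?thesis using neY neQ by (metis One_nat_def Suc_pred length_greater_0_conv)
qed

lemma ext:
  assumes sym: "symE E" and Qi: "isometric V E X Q" and Yi: "isometric V E X Y"
    and hdY: "hd Y = hd Q" and lstY: "last Y = last Q" and w: "w0 \<in> set Y" "w0 \<notin> set Q"
  shows "\<exists>B a b. bypath V E X Q B a b \<and> w0 \<in> set B \<and> set B \<subseteq> set Y \<and> ep B \<subseteq> ep Y"
proof -
  have gQ: "gpath V E Q" and sQ: "set Q \<subseteq> X" using Qi by (auto simp: isometric_def)
  have gY: "gpath V E Y" and sY: "set Y \<subseteq> X" using Yi by (auto simp: isometric_def)
  define n where "n = length Q"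
  have lenY: "length Y = n" using iso_len[OF Yi Qi hdY lstY] n_def by simp
  have neQ: "Q \<noteq> []" and neY: "Y \<noteq> []" using gQ gY by (auto simp: gpath_def)
  have key: "Y ! k = Q ! k" if kk: "k < n" "Y ! k \<in> set Q" for k
  proof -
    obtain m where m: "m < length Q" "Q ! m = Y ! k" using kk(2) by (auto simp: in_set_conv_nth)
    then have "k = m" using iso_idx[OF Yi Qi hdY, of k m] kk lenY n_def by simp
    then show ?thesis using m by simp
  qed
  obtain p where p: "p < n" "Y ! p = w0" using w(1) lenY by (auto simp: in_set_conv_nth)
  have Y0: "Y ! 0 \<in> set Q" using hdY neY neQ by (metis hd_conv_nth hd_in_set)
  have Yn: "Y ! (n - 1) \<in> set Q" using lstY neY neQ lenY by (metis last_conv_nth last_in_set)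
  have p0: "p \<noteq> 0" using Y0 p w(2) by (metis)
  have pn: "p \<noteq> n - 1" using Yn p w(2) by auto
  define A where "A = {k. k < p \<and> Y ! k \<in> set Q}"
  have finA: "finite A" unfolding A_def by auto
  have A0: "0 \<in> A" using p0 Y0 unfolding A_def by auto
  define a where "a = Max A"
  have aA: "a \<in> A" using finA A0 a_def Max_in by blast
  have amax: "k \<le> a" if "k \<in> A" for k using finA that a_def by simp
  define M where "M = {k. p < k \<and> k < n \<and> Y ! k \<in> set Q}"
  have finM: "finite M" unfolding M_def by auto
  have Mn: "n - 1 \<in> M" using p pn Yn unfolding M_def by auto
  define m where "m = Min M"
  have mM: "m \<in> M" using finM Mn m_def Min_in by blast
  have mmin: "m \<le> k" if "k \<in> M" for k using finM that m_def by simp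
  have ap: "a < p" and am: "Y ! a \<in> set Q" using aA A_def by auto
  have pm: "p < m" and mn: "m < n" and mm: "Y ! m \<in> set Q" using mM M_def by auto
  define B where "B = drop a (take (Suc m) Y)"
  have seg: "walk_in E X B \<and> hd B = Y ! a \<and> last B = Y ! m \<and> length B = Suc (m - a)"
    using seg_walk[OF gY sY, of a m] ap pm mn lenY B_def by simp
  have nthB: "B ! t = Y ! (a + t)" if "t < length B" for t
    using that seg ap pm mn lenY unfolding B_def by simp
  have inB: "x \<in> set B \<longleftrightarrow> (\<exists>k. a \<le> k \<and> k \<le> m \<and> x = Y ! k)" for x
  proof
    assume "x \<in> set B"
    then obtain t where "t < length B" "x = B ! t" by (auto simp: in_set_conv_nth)
    then show "\<exists>k. a \<le> k \<and> k \<le> m \<and> x = Y ! k" using nthB seg ap pm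
      by (intro exI[of _ "a + t"]) auto
  next
    assume "\<exists>k. a \<le> k \<and> k \<le> m \<and> x = Y ! k"
    then obtain k where k: "a \<le> k" "k \<le> m" "x = Y ! k" by blast
    then have "k - a < length B" "B ! (k - a) = x" using seg nthB[of "k - a"] by auto
    then show "x \<in> set B" by (metis nth_mem)
  qed
  have hdB: "hd B = Q ! a" using seg key[of a] am ap p by auto
  have lastB: "last B = Q ! m" using seg key[of m] mm mn by auto
  have BQ: "set B \<inter> set Q = {Q ! a, Q ! m}"
  proof
    show "set B \<inter> set Q \<subseteq> {Q ! a, Q ! m}"
    proof
      fix x assume x: "x \<in> set B \<inter> set Q"
      then obtain k where k: "a \<le> k" "k \<le> m" "x = Y ! k" using inB by auto
      have "k = a \<or> k = m"
      proof (cases "k < p")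
        case True
        then have "k \<in> A" using x k A_def by auto
        then show ?thesis using amax k by fastforce
      next
        case False
        then have "k \<noteq> p" using x k p w(2) by auto
        then have "k \<in> M" using False x k mn M_def by auto
        then show ?thesis using mmin k by fastforce
      qed
      then show "x \<in> {Q ! a, Q ! m}" using k key[of a] key[of m] am mm ap p mn by auto
    qed
  next
    have "Q ! a \<in> set B" using inB[of "Q ! a"] key[of a] am ap p pm by auto
    moreover have "Q ! m \<in> set B" using inB[of "Q ! m"] key[of m] mm mn ap pm by (metis le_refl less_imp_le_nat order.strict_trans)
    moreover have "Q ! a \<in> set Q" "Q ! m \<in> set Q" using ap p mn n_def by auto
    ultimately show "{Q ! a, Q ! m} \<subseteq> set B \<inter> set Q" by auto
  qed
  have setBY: "set B \<subseteq> set Y" unfolding B_def by (meson in_set_dropD in_set_takeD subsetI)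
  have gB: "gpath V E B"
  proof -
    have "distinct Y" "set Y \<subseteq> V" using gY by (auto simp: gpath_def)
    then have "distinct B" "set B \<subseteq> V" using setBY unfolding B_def by auto
    moreover have "successively E B" "B \<noteq> []" using seg by (auto simp: walk_succ)
    ultimately show ?thesis by (simp add: gpath_succ)
  qed
  have am2: "a < m" using ap pm by simp
  have grs: "gpath V E (replace_sub Q a m B)"
    using rs_gpath[OF gQ gB am2 _ hdB lastB] mn n_def BQ by simp
  have srs: "set (replace_sub Q a m B) \<subseteq> X"
    using sQ sY setBY unfolding set_rs by (meson in_set_dropD in_set_takeD le_sup_iff subset_iff)
  have neB: "B \<noteq> []" using seg by auto
  have lrs: "length (replace_sub Q a m B) = n"
    using len_rs[OF am2, of Q B] seg mn n_def ap pm by simp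
  have hrs: "hd (replace_sub Q a m B) = hd Q" using hd_rs[OF am2 _ neB hdB] mn n_def by simp
  have lars: "last (replace_sub Q a m B) = last Q" using last_rs[OF am2 _ neB lastB] mn n_def by simp
  have irs: "isometric V E X (replace_sub Q a m B)"
    using geo_iso[OF sym grs srs] lrs hrs lars iso_dist[OF Qi] n_def by simp
  have "bypath V E X Q B a m"
    unfolding bypath_def using gB seg ap pm setBY sY am2 mn n_def hdB lastB BQ irs by auto
  moreover have "w0 \<in> set B" using inB[of w0] p ap pm by (metis less_imp_le_nat)
  moreover have "ep B \<subseteq> ep Y" unfolding B_def by (rule ep_seg)
  ultimately show ?thesis using setBY by blast
qed

section \<open>Topology on the plane\<close>

lemma conn_inside:
  assumes "connected C" "C \<inter> S = {}" "z \<in> C" "z \<in> inside S"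
  shows "C \<subseteq> inside S"
proof
  fix c assume "c \<in> C"
  then have "connected_component (- S) z c"
    using assms by (intro connected_componentI[of C]) auto
  then show "c \<in> inside S" using inside_same_component assms(4) by blast
qed

lemma conn_outside:
  assumes "connected C" "C \<inter> S = {}" "z \<in> C" "z \<in> outside S"
  shows "C \<subseteq> outside S"
proof
  fix c assume "c \<in> C"
  then have "connected_component (- S) z c"
    using assms by (intro connected_componentI[of C]) auto
  then show "c \<in> outside S" using outside_same_component assms(4) by blast
qed

lemma outside_sub:
  fixes S T :: "complex set"
  assumes "T \<subseteq> S \<union> inside S"
  shows "outside S \<subseteq> outside T"
proof
  fix x assume x: "x \<in> outside S"
  let ?C = "connected_component_set (- S) x"
  have C1: "?C \<subseteq> outside S"
    using x outside_same_component by (metis mem_Collect_eq subsetI)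
  have "outside S \<subseteq> - T" using assms union_with_inside by blast
  then have "?C \<subseteq> connected_component_set (- T) x"
    using C1 x by (intro connected_component_maximal) (auto simp: outside_def)
  moreover have "\<not> bounded ?C" using x by (simp add: outside)
  ultimately have "\<not> bounded (connected_component_set (- T) x)" using bounded_subset by blast
  then show "x \<in> outside T" by (simp add: outside)
qed

lemma inside_sub:
  fixes S T :: "complex set"
  assumes "T \<subseteq> S \<union> inside S"
  shows "inside T \<subseteq> S \<union> inside S"
proof -
  have "outside S \<subseteq> outside T" by (rule outside_sub[OF assms])
  moreover have "inside T \<inter> outside T = {}" by simp
  ultimately show ?thesis using union_with_inside[of S] by blast
qed

lemma lemJ:
  fixes S0 T :: "complex set"
  assumes "closed T" "frontier (outside S0) = S0" "T \<subseteq> S0 \<union> inside S0" "z \<in> S0" "z \<notin> T"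
  shows "z \<in> outside T"
proof -
  have "z \<in> closure (outside S0)" using assms(2,4) by (metis Diff_iff frontier_def)
  also have "\<dots> \<subseteq> closure (outside T)" using outside_sub[OF assms(3)] by (rule closure_mono)
  also have "\<dots> \<subseteq> T \<union> outside T" using closure_outside_subset[OF assms(1)] by blast
  finally show ?thesis using assms(5) by blast
qed

lemma key_top:
  fixes S S0 S1 T :: "complex set"
  assumes cS: "closed S" and cT: "closed T" and cS1: "closed S1"
    and fo0: "frontier (outside S0) = S0" and fi1: "frontier (inside S1) = S1"
    and ci1: "connected (inside S1)"
    and SS0: "S \<subseteq> S0 \<union> inside S0" and S1S0: "S1 \<subseteq> S0 \<union> inside S0" and SS01: "S \<subseteq> S0 \<union> S1"
    and z: "z \<in> S0" "z \<in> S1" "z \<notin> S"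
    and TS: "T \<subseteq> S \<union> inside S" and x: "x \<in> S1" "x \<notin> T"
  shows "x \<in> outside T"
proof -
  have h1: "inside S1 \<inter> S0 = {}"
  proof (rule ccontr)
    assume "inside S1 \<inter> S0 \<noteq> {}"
    then obtain p where p: "p \<in> inside S1" "p \<in> S0" by blast
    then have "p \<notin> S1" using inside_no_overlap by blast
    then have "p \<in> outside S1" using lemJ[OF cS1 fo0 S1S0 p(2)] by blast
    then show False using p(1) inside_Int_outside by blast
  qed
  have h2: "inside S1 \<inter> S = {}" using h1 SS01 inside_no_overlap[of S1] by blast
  have h3: "z \<in> outside S" using lemJ[OF cS fo0 SS0 z(1) z(3)] .
  have zc: "z \<in> closure (inside S1)" using fi1 z(2) by (metis Diff_iff frontier_def)
  have "outside S \<inter> closure (inside S1) \<noteq> {}" using h3 zc by blast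
  then have "outside S \<inter> inside S1 \<noteq> {}"
    using open_Int_closure_eq_empty[OF open_outside[OF cS]] by blast
  then obtain y where y: "y \<in> inside S1" "y \<in> outside S" by blast
  have h5: "inside S1 \<subseteq> outside S" using conn_outside[OF ci1 h2 y] .
  have h6: "outside S \<subseteq> outside T" by (rule outside_sub[OF TS])
  have "x \<in> closure (inside S1)" using fi1 x(1) by (metis Diff_iff frontier_def)
  also have "\<dots> \<subseteq> closure (outside T)" using h5 h6 by (intro closure_mono) blast
  also have "\<dots> \<subseteq> T \<union> outside T" using closure_outside_subset[OF cT] by blast
  finally show ?thesis using x(2) by blast
qed

fun acurve :: "('v \<Rightarrow> 'v \<Rightarrow> real \<Rightarrow> complex) \<Rightarrow> 'v list \<Rightarrow> real \<Rightarrow> complex" where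
  "acurve drw (x # y # z # r) = drw x y +++ acurve drw (y # z # r)"
| "acurve drw [x, y] = drw x y"
| "acurve drw _ = linepath 0 0"

section \<open>Plane graphs\<close>

locale pg =
  fixes V :: "'v set" and E :: "'v \<Rightarrow> 'v \<Rightarrow> bool"
    and pos :: "'v \<Rightarrow> complex" and drw :: "'v \<Rightarrow> 'v \<Rightarrow> real \<Rightarrow> complex"
  assumes G: "plane_graph V E pos drw"
begin

lemma finV: "finite V" using G unfolding plane_graph_def by blast

lemma Eprops: "E x y \<Longrightarrow> x \<in> V \<and> y \<in> V \<and> x \<noteq> y \<and> E y x"
  using G unfolding plane_graph_def by blast

lemma symE: "symE E" using Eprops by (auto simp: symE_def)

lemma injpos: "inj_on pos V" using G unfolding plane_graph_def by blast

lemma arc_drw: "E x y \<Longrightarrow> arc (drw x y) \<and> pathstart (drw x y) = pos x \<and> pathfinish (drw x y) = pos y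
   \<and> drw y x = reversepath (drw x y) \<and> path_image (drw x y) \<inter> pos ` V \<subseteq> {pos x, pos y}"
proof -
  assume a: "E x y"
  have "\<forall>x y. E x y \<longrightarrow>
        Path_Connected.arc (drw x y) \<and> pathstart (drw x y) = pos x \<and>
        pathfinish (drw x y) = pos y \<and> drw y x = reversepath (drw x y) \<and>
        path_image (drw x y) \<inter> pos ` V \<subseteq> {pos x, pos y}"
    using G unfolding plane_graph_def by blast
  then show ?thesis using a by blast
qed

lemma edge_cross: "E x y \<Longrightarrow> E x' y' \<Longrightarrow> {x, y} \<noteq> {x', y'} \<Longrightarrow>
   path_image (drw x y) \<inter> path_image (drw x' y') \<subseteq> pos ` ({x, y} \<inter> {x', y'})"
proof -
  assume a: "E x y" "E x' y'" "{x, y} \<noteq> {x', y'}"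
  have "\<forall>x y x' y'. E x y \<and> E x' y' \<and> {x, y} \<noteq> {x', y'} \<longrightarrow>
        path_image (drw x y) \<inter> path_image (drw x' y') \<subseteq> pos ` ({x, y} \<inter> {x', y'})"
    using G unfolding plane_graph_def by blast
  then show ?thesis using a by blast
qed

lemma img_sym: "E x y \<Longrightarrow> path_image (drw y x) = path_image (drw x y)"
  using arc_drw by (simp add: path_image_reversepath)

definition eimg :: "'v list \<Rightarrow> complex set" where
  "eimg L = (\<Union>(a, b)\<in>ep L. path_image (drw a b))"

abbreviation cimg :: "'v list \<Rightarrow> complex set" where
  "cimg L \<equiv> path_image (pcurve pos drw L)"

definition pl :: "'v list \<Rightarrow> bool" where
  "pl L \<longleftrightarrow> L \<noteq> [] \<and> successively E L \<and> set L \<subseteq> V"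

lemma gpath_pl: "gpath V E L \<Longrightarrow> pl L"
  by (simp add: gpath_succ pl_def)

lemma pcurve_props:
  "L \<noteq> [] \<Longrightarrow> successively E L \<Longrightarrow> path (pcurve pos drw L) \<and> pathstart (pcurve pos drw L) = pos (hd L)
    \<and> pathfinish (pcurve pos drw L) = pos (last L) \<and> cimg L = pos ` set L \<union> eimg L"
proof (induction L)
  case Nil
  then show ?case by simp
next
  case (Cons x rest)
  show ?case
  proof (cases rest)
    case Nil
    then show ?thesis by (simp add: eimg_def path_def pathstart_def pathfinish_def)
  next
    case (Cons y rest')
    have E: "E x y" and s: "successively E (y # rest')" using Cons.prems Cons by auto
    have IH: "path (pcurve pos drw (y # rest')) \<and> pathstart (pcurve pos drw (y # rest')) = pos y
      \<and> pathfinish (pcurve pos drw (y # rest')) = pos (last (y # rest'))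
      \<and> cimg (y # rest') = pos ` set (y # rest') \<union> eimg (y # rest')"
      using Cons.IH s Cons by auto
    have a: "arc (drw x y)" "pathstart (drw x y) = pos x" "pathfinish (drw x y) = pos y"
      using arc_drw[OF E] by auto
    have px: "pos x \<in> path_image (drw x y)" using a by (metis pathstart_in_path_image)
    have ee: "eimg (x # y # rest') = path_image (drw x y) \<union> eimg (y # rest')"
      by (simp add: eimg_def)
    have pc: "pcurve pos drw (x # y # rest') = drw x y +++ pcurve pos drw (y # rest')" by simp
    have "cimg (x # y # rest') = path_image (drw x y) \<union> cimg (y # rest')"
      unfolding pc using a IH by (simp add: path_image_join)
    then have "cimg (x # y # rest') = pos ` set (x # y # rest') \<union> eimg (x # y # rest')"
      using IH px ee by auto
    moreover have "path (pcurve pos drw (x # y # rest'))" unfolding pc using a IH by (simp add: arc_imp_path)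
    ultimately show ?thesis using IH a Cons by simp
  qed
qed

lemma pl_props:
  "pl L \<Longrightarrow> path (pcurve pos drw L) \<and> pathstart (pcurve pos drw L) = pos (hd L)
    \<and> pathfinish (pcurve pos drw L) = pos (last L) \<and> cimg L = pos ` set L \<union> eimg L"
  using pcurve_props by (simp add: pl_def)

lemma closed_cimg: "pl L \<Longrightarrow> closed (cimg L)"
  using pl_props closed_path_image by blast

lemma ep_E: "pl L \<Longrightarrow> (a, b) \<in> ep L \<Longrightarrow> E a b"
  by (auto simp: pl_def succ_ep)

lemma vert_on:
  assumes "pl L" "x \<in> V" "pos x \<in> cimg L"
  shows "x \<in> set L"
proof -
  have sL: "set L \<subseteq> V" using assms(1) by (simp add: pl_def)
  consider "pos x \<in> pos ` set L" | a b where "(a, b) \<in> ep L" "pos x \<in> path_image (drw a b)"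
    using assms pl_props[OF assms(1)] unfolding eimg_def by blast
  then show ?thesis
  proof cases
    case 1
    then show ?thesis using injpos sL assms(2) by (metis inj_on_image_mem_iff)
  next
    case 2
    have Eab: "E a b" using ep_E[OF assms(1) 2(1)] .
    then have "pos x \<in> {pos a, pos b}" using arc_drw[OF Eab] 2(2) assms(2) by blast
    moreover have "a \<in> V" "b \<in> V" using Eprops[OF Eab] by auto
    ultimately have "x = a \<or> x = b" using injpos assms(2) by (auto dest: inj_onD)
    then show ?thesis using ep_set[OF 2(1)] by auto
  qed
qed

lemma cimg_eq: "pl L \<Longrightarrow> cimg L = pos ` set L \<union> eimg L"
  using pl_props by blast

lemma eimgI: "(a, b) \<in> ep L \<Longrightarrow> path_image (drw a b) \<subseteq> eimg L"
  unfolding eimg_def using UN_upper[of "(a, b)" "ep L" "\<lambda>x. case x of (a, b) \<Rightarrow> path_image (drw a b)"]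
  by simp

lemma eimgE:
  assumes "p \<in> eimg L"
  obtains a b where "(a, b) \<in> ep L" "p \<in> path_image (drw a b)"
  using assms unfolding eimg_def by auto

lemma cimg_within:
  assumes "pl L" "\<And>w. w \<in> set L \<Longrightarrow> pos w \<in> W" "\<And>a b. (a, b) \<in> ep L \<Longrightarrow> path_image (drw a b) \<subseteq> W"
  shows "cimg L \<subseteq> W"
proof
  fix p assume "p \<in> cimg L"
  then have "p \<in> pos ` set L \<or> p \<in> eimg L" using cimg_eq[OF assms(1)] by simp
  then show "p \<in> W"
  proof
    assume "p \<in> pos ` set L"
    then show ?thesis using assms(2) by auto
  next
    assume "p \<in> eimg L"
    then obtain a b where "(a, b) \<in> ep L" "p \<in> path_image (drw a b)" by (rule eimgE)
    then show ?thesis using assms(3) by blast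
  qed
qed

lemma pos_in_cimg: "pl L \<Longrightarrow> w \<in> set L \<Longrightarrow> pos w \<in> cimg L"
  using cimg_eq by simp

lemma edge_in_cimg: "pl L \<Longrightarrow> (a, b) \<in> ep L \<Longrightarrow> path_image (drw a b) \<subseteq> cimg L"
  using cimg_eq eimgI by fastforce

lemma cimg_sub2:
  assumes "pl L" "pl L1" "pl L2" "set L \<subseteq> set L1 \<union> set L2" "ep L \<subseteq> ep L1 \<union> ep L2"
  shows "cimg L \<subseteq> cimg L1 \<union> cimg L2"
proof (rule cimg_within[OF assms(1)])
  fix w assume "w \<in> set L"
  then show "pos w \<in> cimg L1 \<union> cimg L2" using assms(4) pos_in_cimg[OF assms(2)] pos_in_cimg[OF assms(3)] by blast
next
  fix a b assume "(a, b) \<in> ep L"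
  then have "(a, b) \<in> ep L1 \<or> (a, b) \<in> ep L2" using assms(5) by blast
  then show "path_image (drw a b) \<subseteq> cimg L1 \<union> cimg L2"
  proof
    assume h: "(a, b) \<in> ep L1"
    show ?thesis by (rule order_trans[OF edge_in_cimg[OF assms(2) h]]) simp
  next
    assume h: "(a, b) \<in> ep L2"
    show ?thesis by (rule order_trans[OF edge_in_cimg[OF assms(3) h]]) simp
  qed
qed

end

context pg
begin

lemma edge_meet:
  assumes "pl L" "E x y" "x \<notin> set L"
  shows "path_image (drw x y) \<inter> cimg L \<subseteq> {pos y}"
proof
  fix q assume q: "q \<in> path_image (drw x y) \<inter> cimg L"
  have xV: "x \<in> V" "y \<in> V" using Eprops[OF assms(2)] by auto
  have sL: "set L \<subseteq> V" using assms(1) by (simp add: pl_def)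
  have av: "path_image (drw x y) \<inter> pos ` V \<subseteq> {pos x, pos y}" using arc_drw[OF assms(2)] by blast
  have "q \<in> pos ` set L \<or> q \<in> eimg L" using q cimg_eq[OF assms(1)] by auto
  then show "q \<in> {pos y}"
  proof
    assume "q \<in> pos ` set L"
    then obtain w where w: "w \<in> set L" "q = pos w" by blast
    then have "q \<in> {pos x, pos y}" using av q sL by blast
    moreover have "q \<noteq> pos x"
    proof
      assume "q = pos x"
      then have "w = x" using w injpos sL xV by (metis inj_onD subsetD)
      then show False using w assms(3) by simp
    qed
    ultimately show ?thesis by simp
  next
    assume "q \<in> eimg L"
    then obtain a b where ab: "(a, b) \<in> ep L" "q \<in> path_image (drw a b)" by (rule eimgE)
    have Eab: "E a b" using ep_E[OF assms(1) ab(1)] .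
    have abL: "a \<in> set L" "b \<in> set L" using ep_set[OF ab(1)] by auto
    then have "{x, y} \<noteq> {a, b}" using assms(3) by auto
    then have "q \<in> pos ` ({x, y} \<inter> {a, b})" using edge_cross[OF assms(2) Eab] q ab(2) by blast
    then obtain w where "w \<in> {x, y}" "w \<in> {a, b}" "q = pos w" by blast
    then show ?thesis using abL assms(3) by auto
  qed
qed

lemma gpath_tl: "gpath V E (x # L) \<Longrightarrow> L \<noteq> [] \<Longrightarrow> gpath V E L"
  by (cases L) (auto simp: gpath_succ)

lemma acurve_props:
  "gpath V E L \<Longrightarrow> 2 \<le> length L \<Longrightarrow> arc (acurve drw L) \<and> pathstart (acurve drw L) = pos (hd L)
    \<and> pathfinish (acurve drw L) = pos (last L) \<and> path_image (acurve drw L) = cimg L"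
proof (induction L)
  case Nil
  then show ?case by simp
next
  case (Cons x rest)
  show ?case
  proof (cases rest)
    case Nil
    then show ?thesis using Cons.prems by simp
  next
    case (Cons y rest')
    have Exy: "E x y" using Cons.prems Cons by (simp add: gpath_succ)
    have a: "arc (drw x y)" "pathstart (drw x y) = pos x" "pathfinish (drw x y) = pos y"
      using arc_drw[OF Exy] by auto
    have plx: "pl (x # rest)" using Cons.prems gpath_pl by blast
    show ?thesis
    proof (cases rest')
      case Nil
      have pl2: "pl [x, y]" using plx Cons Nil by simp
      have c: "cimg [x, y] = pos ` set [x, y] \<union> eimg [x, y]" by (rule cimg_eq[OF pl2])
      have "pos ` set [x, y] \<union> eimg [x, y] = path_image (drw x y)"
        using a pathstart_in_path_image[of "drw x y"] pathfinish_in_path_image[of "drw x y"]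
        by (auto simp: eimg_def)
      with c have cxy: "cimg [x, y] = path_image (drw x y)" by (rule trans)
      have ac: "acurve drw (x # rest) = drw x y" using Cons Nil by simp
      show ?thesis unfolding ac using a cxy Cons Nil by simp
    next
      case (Cons z r)
      have g': "gpath V E rest" using gpath_tl Cons.prems \<open>rest = y # rest'\<close> by blast
      have IH: "arc (acurve drw rest) \<and> pathstart (acurve drw rest) = pos y
        \<and> pathfinish (acurve drw rest) = pos (last rest) \<and> path_image (acurve drw rest) = cimg rest"
        using Cons.IH[OF g'] \<open>rest = y # rest'\<close> Cons by simp
      have xn: "x \<notin> set rest" using Cons.prems by (simp add: gpath_def)
      have plr: "pl rest" using g' gpath_pl by blast
      have meet: "path_image (drw x y) \<inter> path_image (acurve drw rest) \<subseteq> {pathstart (acurve drw rest)}"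
        using edge_meet[OF plr Exy xn] IH by simp
      have ac: "acurve drw (x # rest) = drw x y +++ acurve drw rest"
        using \<open>rest = y # rest'\<close> Cons by simp
      have arc: "arc (acurve drw (x # rest))"
        unfolding ac using arc_join[OF a(1) _ _ meet] IH a by simp
      have px: "pos x \<in> path_image (drw x y)" using a by (metis pathstart_in_path_image)
      have ee: "eimg (x # rest) = path_image (drw x y) \<union> eimg rest"
        using \<open>rest = y # rest'\<close> by (simp add: eimg_def)
      have "path_image (acurve drw (x # rest)) = path_image (drw x y) \<union> cimg rest"
        unfolding ac using IH a by (simp add: path_image_join)
      also have "\<dots> = cimg (x # rest)"
        using cimg_eq[OF plx] cimg_eq[OF plr] ee px by auto
      finally show ?thesis using arc ac IH a \<open>rest = y # rest'\<close> by simp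
    qed
  qed
qed

lemma ep_uv:
  assumes "gpath V E L" "hd L = u" "last L = v" "3 \<le> length L" "(a, b) \<in> ep L"
  shows "{a, b} \<noteq> {u, v}"
proof
  assume eq: "{a, b} = {u, v}"
  have "\<exists>k. Suc k < length L \<and> a = L ! k \<and> b = L ! Suc k" using assms(5) by (simp only: ep_nth)
  then obtain k where k: "Suc k < length L" "a = L ! k" "b = L ! Suc k" by (elim exE conjE)
  have ne: "L \<noteq> []" and d: "distinct L" using assms(1) by (auto simp: gpath_def)
  have u: "u = L ! 0" using assms(2) ne by (simp add: hd_conv_nth)
  have v: "v = L ! (length L - 1)" using assms(3) ne by (simp add: last_conv_nth)
  have idx: "i = j" if "i < length L" "j < length L" "L ! i = L ! j" for i j
    using d that nth_eq_iff_index_eq by blast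
  from eq have "(a = u \<and> b = v) \<or> (a = v \<and> b = u)" by (rule doubleton_eq_iff[THEN iffD1])
  then show False
  proof
    assume ab: "a = u \<and> b = v"
    have "L ! k = L ! 0" using ab k u by simp
    then have k0: "k = 0" using idx[of k 0] k ne by simp
    have "L ! Suc k = L ! (length L - 1)" using ab k v by simp
    then have "Suc k = length L - 1" using idx[of "Suc k" "length L - 1"] k by simp
    then show False using assms(4) k0 by simp
  next
    assume ab: "a = v \<and> b = u"
    have "L ! k = L ! (length L - 1)" using ab k v by simp
    then have "k = length L - 1" using idx[of k "length L - 1"] k by simp
    then show False using k by simp
  qed
qed

lemma int2:
  assumes g1: "gpath V E L1" and g2: "gpath V E L2" and h: "hd L1 = u" "hd L2 = u" "last L1 = v" "last L2 = v"
    and disj: "set L1 \<inter> set L2 = {u, v}" and l2: "3 \<le> length L2"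
  shows "cimg L1 \<inter> cimg L2 \<subseteq> {pos u, pos v}"
proof
  fix q assume q: "q \<in> cimg L1 \<inter> cimg L2"
  have p1: "pl L1" and p2: "pl L2" using g1 g2 gpath_pl by auto
  have s1: "set L1 \<subseteq> V" and s2: "set L2 \<subseteq> V" using g1 g2 by (auto simp: gpath_def)
  have c1: "q \<in> pos ` set L1 \<or> q \<in> eimg L1" using q cimg_eq[OF p1] by auto
  have c2: "q \<in> pos ` set L2 \<or> q \<in> eimg L2" using q cimg_eq[OF p2] by auto
  show "q \<in> {pos u, pos v}"
  proof (cases "q \<in> pos ` set L1")
    case True
    then obtain w where w: "w \<in> set L1" "q = pos w" by blast
    then have "w \<in> set L2" using vert_on[OF p2, of w] q s1 by auto
    then show ?thesis using w disj by auto
  next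
    case F1: False
    show ?thesis
    proof (cases "q \<in> pos ` set L2")
      case True
      then obtain w where w: "w \<in> set L2" "q = pos w" by blast
      then have "w \<in> set L1" using vert_on[OF p1, of w] q s2 by auto
      then show ?thesis using w disj by auto
    next
      case False
      then have e1: "q \<in> eimg L1" and e2: "q \<in> eimg L2" using c1 c2 F1 by auto
      obtain a b where ab: "(a, b) \<in> ep L1" "q \<in> path_image (drw a b)" using e1 by (rule eimgE)
      obtain c d where cd: "(c, d) \<in> ep L2" "q \<in> path_image (drw c d)" using e2 by (rule eimgE)
      have Eab: "E a b" using ep_E[OF p1 ab(1)] .
      have Ecd: "E c d" using ep_E[OF p2 cd(1)] .
      have abL: "a \<in> set L1" "b \<in> set L1" using ep_set[OF ab(1)] by auto
      have cdL: "c \<in> set L2" "d \<in> set L2" using ep_set[OF cd(1)] by auto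
      show ?thesis
      proof (cases "{a, b} = {c, d}")
        case True
        then have "a \<in> set L2" "b \<in> set L2" using cdL by auto
        then have "a \<in> {u, v}" "b \<in> {u, v}" using abL disj by auto
        moreover have "a \<noteq> b" using Eprops[OF Eab] by simp
        ultimately have "{a, b} = {u, v}" by auto
        then have "{c, d} = {u, v}" using True by simp
        then show ?thesis using ep_uv[OF g2 h(2) h(4) l2 cd(1)] by simp
      next
        case False
        then have "q \<in> pos ` ({a, b} \<inter> {c, d})" using edge_cross[OF Eab Ecd] ab(2) cd(2) by blast
        then obtain w where "w \<in> {a, b}" "w \<in> {c, d}" "q = pos w" by blast
        then have "w \<in> set L1 \<inter> set L2" "q = pos w" using abL cdL by auto
        then show ?thesis using disj by auto
      qed
    qed
  qed
qed

lemma jordan2: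
  assumes g1: "gpath V E L1" and g2: "gpath V E L2" and h: "hd L1 = u" "hd L2 = u" "last L1 = v" "last L2 = v"
    and uv: "u \<noteq> v" and disj: "set L1 \<inter> set L2 = {u, v}" and l2: "3 \<le> length L2"
  shows "frontier (inside (cimg L1 \<union> cimg L2)) = cimg L1 \<union> cimg L2"
    and "frontier (outside (cimg L1 \<union> cimg L2)) = cimg L1 \<union> cimg L2"
    and "connected (inside (cimg L1 \<union> cimg L2))"
proof -
  have l1: "2 \<le> length L1"
  proof (cases L1)
    case Nil then show ?thesis using g1 by (simp add: gpath_def)
  next
    case (Cons a list) then show ?thesis using h uv by (cases list) auto
  qed
  have a1: "arc (acurve drw L1) \<and> pathstart (acurve drw L1) = pos u
    \<and> pathfinish (acurve drw L1) = pos v \<and> path_image (acurve drw L1) = cimg L1"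
    using acurve_props[OF g1 l1] h by simp
  have a2: "arc (acurve drw L2) \<and> pathstart (acurve drw L2) = pos u
    \<and> pathfinish (acurve drw L2) = pos v \<and> path_image (acurve drw L2) = cimg L2"
    using acurve_props[OF g2] l2 h by simp
  let ?g1 = "acurve drw L1" and ?g2 = "reversepath (acurve drw L2)"
  have ii: "path_image ?g1 \<inter> path_image ?g2 \<subseteq> {pathstart ?g1, pathstart ?g2}"
    using int2[OF g1 g2 h disj l2] a1 a2 by (simp add: path_image_reversepath)
  have ar1: "arc ?g1" using a1 by simp
  have ar2: "arc ?g2" using a1 a2 arc_reversepath by blast
  have f1: "pathfinish ?g1 = pathstart ?g2" using a1 a2 by (simp add: pathstart_reversepath)
  have f2: "pathfinish ?g2 = pathstart ?g1" using a1 a2 by (simp add: pathfinish_reversepath)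
  have sp: "simple_path (?g1 +++ ?g2)" by (rule simple_path_join_loop[OF ar1 ar2 f1 f2 ii])
  have cl: "pathfinish (?g1 +++ ?g2) = pathstart (?g1 +++ ?g2)" using a1 a2 by simp
  have im: "path_image (?g1 +++ ?g2) = cimg L1 \<union> cimg L2"
    using a1 a2 by (simp add: path_image_join path_image_reversepath)
  note J = Jordan_inside_outside[OF sp cl]
  have J1: "frontier (inside (path_image (?g1 +++ ?g2))) = path_image (?g1 +++ ?g2)" using J by blast
  have J2: "frontier (outside (path_image (?g1 +++ ?g2))) = path_image (?g1 +++ ?g2)" using J by blast
  have J3: "connected (inside (path_image (?g1 +++ ?g2)))" using J by blast
  show "frontier (inside (cimg L1 \<union> cimg L2)) = cimg L1 \<union> cimg L2" using J1 unfolding im .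
  show "frontier (outside (cimg L1 \<union> cimg L2)) = cimg L1 \<union> cimg L2" using J2 unfolding im .
  show "connected (inside (cimg L1 \<union> cimg L2))" using J3 unfolding im .
qed

lemma edge_in:
  assumes p1: "pl L1" and p2: "pl L2" and Exy: "E x y" and xin: "pos x \<in> inside (cimg L1 \<union> cimg L2)"
  shows "path_image (drw x y) \<subseteq> (cimg L1 \<union> cimg L2) \<union> inside (cimg L1 \<union> cimg L2)"
proof -
  let ?S = "cimg L1 \<union> cimg L2"
  let ?g = "drw x y"
  have xn1: "x \<notin> set L1" using pos_in_cimg[OF p1] xin inside_no_overlap by blast
  have xn2: "x \<notin> set L2" using pos_in_cimg[OF p2] xin inside_no_overlap by blast
  have hA: "path_image ?g \<inter> ?S \<subseteq> {pos y}"
    using edge_meet[OF p1 Exy xn1] edge_meet[OF p2 Exy xn2] by blast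
  have a: "arc ?g" "pathstart ?g = pos x" "pathfinish ?g = pos y" using arc_drw[OF Exy] by auto
  have pg: "path ?g" using a(1) arc_imp_path by blast
  have inj: "inj_on ?g {0..1}" using a(1) by (simp add: arc_def)
  show ?thesis
  proof (cases "pos y \<in> ?S")
    case True
    let ?A = "?g ` {0..<1}"
    have cA: "connected ?A"
      using pg unfolding path_def
      by (intro connected_continuous_image) (auto intro: continuous_on_subset)
    have AS: "?A \<inter> ?S = {}"
    proof (rule ccontr)
      assume "?A \<inter> ?S \<noteq> {}"
      then obtain q where q: "q \<in> ?A" "q \<in> ?S" by blast
      then obtain t where t0: "t \<in> {0..<1}" "q = ?g t" by blast
      then have t: "0 \<le> t" "t < 1" "?g t \<in> ?S" using q by auto
      then have "?g t \<in> path_image ?g" by (auto simp: path_image_def)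
      then have "?g t = pos y" using hA t by blast
      then have "?g t = ?g 1" using a(3) by (simp add: pathfinish_def)
      then have "t = 1" using inj t by (auto dest: inj_onD)
      then show False using t by simp
    qed
    have g0: "?g 0 \<in> ?A" by auto
    have g0e: "?g 0 = pos x" using a(2) by (simp add: pathstart_def)
    have x0: "pos x \<in> ?A" using g0 g0e by metis
    have "?A \<subseteq> inside ?S" using conn_inside[OF cA AS x0 xin] .
    moreover have "path_image ?g \<subseteq> ?A \<union> {?g 1}"
    proof -
      have "{0..1::real} = {0..<1} \<union> {1}" by auto
      then show ?thesis by (simp add: path_image_def)
    qed
    moreover have "?g 1 \<in> ?S" using True a(3) by (simp add: pathfinish_def)
    ultimately show ?thesis by blast
  next
    case False
    then have "path_image ?g \<inter> ?S = {}" using hA by blast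
    moreover have "pos x \<in> path_image ?g" using a(2) by (metis pathstart_in_path_image)
    ultimately have "path_image ?g \<subseteq> inside ?S"
      using conn_inside[OF connected_path_image[OF pg]] xin by blast
    then show ?thesis by blast
  qed
qed

end

lemma int_edge:
  assumes "gpath V E L" "3 \<le> length L" "(c, d) \<in> ep L"
  shows "(c \<in> set L \<and> c \<noteq> hd L \<and> c \<noteq> last L) \<or> (d \<in> set L \<and> d \<noteq> hd L \<and> d \<noteq> last L)"
proof -
  have "\<exists>k. Suc k < length L \<and> c = L ! k \<and> d = L ! Suc k" using assms(3) by (simp only: ep_nth)
  then obtain k where k: "Suc k < length L" "c = L ! k" "d = L ! Suc k" by (elim exE conjE)
  have ne: "L \<noteq> []" and dL: "distinct L" using assms(1) by (auto simp: gpath_def)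
  have h: "hd L = L ! 0" using ne by (simp add: hd_conv_nth)
  have l: "last L = L ! (length L - 1)" using ne by (simp add: last_conv_nth)
  note eqi = nth_eq_iff_index_eq[OF dL]
  show ?thesis
  proof (cases k)
    case 0
    have "L ! 1 \<noteq> L ! 0" using assms(2) eqi[of 1 0] by linarith
    moreover have "L ! 1 \<noteq> L ! (length L - 1)" using assms(2) eqi[of 1 "length L - 1"] by linarith
    moreover have "d = L ! 1" using k 0 by simp
    moreover have "d \<in> set L" using k by simp
    ultimately show ?thesis using h l by auto
  next
    case (Suc k')
    have "L ! k \<noteq> L ! 0" using k Suc eqi[of k 0] by linarith
    moreover have "L ! k \<noteq> L ! (length L - 1)" using k eqi[of k "length L - 1"] by linarith
    moreover have "c \<in> set L" using k by simp
    ultimately show ?thesis using h l k by auto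
  qed
qed

lemma bp_basic:
  assumes sym: "symE E" and Qi: "isometric V E X Q" and bp: "bypath V E X Q B i j"
  shows "gpath V E (replace_sub Q i j B)" "isometric V E X (replace_sub Q i j B)"
    "hd (replace_sub Q i j B) = hd Q" "last (replace_sub Q i j B) = last Q"
    "length (replace_sub Q i j B) = length Q" "3 \<le> length Q" "length B = Suc (j - i)"
    "set (replace_sub Q i j B) \<subseteq> set Q \<union> set B" "set B \<subseteq> set (replace_sub Q i j B)"
    "ep (replace_sub Q i j B) \<subseteq> ep Q \<union> ep B" "ep B \<subseteq> ep (replace_sub Q i j B)"
    "set B \<inter> set Q = {hd B, last B}" "gpath V E B" "3 \<le> length B" "i < j" "j < length Q"
proof -
  have b: "gpath V E B" "3 \<le> length B" "set B \<subseteq> X" "i < j" "j < length Q" "hd B = Q ! i" "last B = Q ! j"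
    "set B \<inter> set Q = {Q ! i, Q ! j}" "isometric V E X (replace_sub Q i j B)"
    using bp unfolding bypath_def by auto
  have neB: "B \<noteq> []" using b(1) by (simp add: gpath_def)
  show g: "gpath V E (replace_sub Q i j B)" using b(9) by (simp add: isometric_def)
  show "isometric V E X (replace_sub Q i j B)" by (rule b(9))
  show h: "hd (replace_sub Q i j B) = hd Q" using hd_rs[OF b(4) b(5) neB b(6)] .
  show l: "last (replace_sub Q i j B) = last Q" using last_rs[OF b(4) b(5) neB b(7)] .
  show len: "length (replace_sub Q i j B) = length Q" using iso_len[OF b(9) Qi h l] .
  have "length (replace_sub Q i j B) = i + length B + (length Q - Suc j)" using len_rs[OF b(4) b(5)] .
  then show lB: "length B = Suc (j - i)" using len b(4) b(5) by simp
  then show "3 \<le> length Q" using b(2) b(5) by simp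
  show "set (replace_sub Q i j B) \<subseteq> set Q \<union> set B"
    unfolding set_rs by (meson Un_iff in_set_dropD in_set_takeD subsetI)
  show "set B \<subseteq> set (replace_sub Q i j B)" unfolding set_rs by blast
  show "ep (replace_sub Q i j B) \<subseteq> ep Q \<union> ep B" using ep_rs[OF b(4) b(5) neB b(6) b(7)] .
  show "ep B \<subseteq> ep (replace_sub Q i j B)" by (rule ep_B_rs)
  show "set B \<inter> set Q = {hd B, last B}" using b(6-8) by simp
  show "gpath V E B" "3 \<le> length B" "i < j" "j < length Q" using b by auto
qed

locale setting = pg +
  fixes u v and P Q
  assumes uv: "u \<in> V" "v \<in> V"
    and P: "gpath V E P" "hd P = u" "last P = v"
    and Q: "gpath V E Q" "hd Q = u" "last Q = v"
    and disj: "set P \<inter> set Q = {u, v}"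
    and Piso: "isometric V E (region V pos drw P Q \<union> set P \<union> set Q) P"
    and Pfree: "bypath_free V E (region V pos drw P Q \<union> set P \<union> set Q) P"
    and Qiso: "isometric V E (region V pos drw P Q \<union> set Q) Q"
begin

abbreviation "R \<equiv> region V pos drw P Q"
abbreviation "XH \<equiv> R \<union> set P \<union> set Q"
abbreviation "XQ \<equiv> R \<union> set Q"
abbreviation "S0 \<equiv> cimg P \<union> cimg Q"

lemma plP: "pl P" using P gpath_pl by blast
lemma plQ: "pl Q" using Q gpath_pl by blast

lemma reg_in: "x \<in> region V pos drw L1 L2 \<longleftrightarrow> x \<in> V \<and> pos x \<in> inside (cimg L1 \<union> cimg L2)"
  by (simp add: region_def)

lemma reg_disj:
  assumes "pl L1" "pl L2"
  shows "region V pos drw L1 L2 \<inter> set L1 = {}" "region V pos drw L1 L2 \<inter> set L2 = {}"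
  using pos_in_cimg[OF assms(1)] pos_in_cimg[OF assms(2)] inside_no_overlap
  unfolding region_def by blast+

lemma reg_fin: "finite (region V pos drw L1 L2)"
  using finV unfolding region_def by simp

end


locale bsetting = setting +
  fixes B i j
  assumes bp: "bypath V E (region V pos drw P Q \<union> set Q) Q B i j"
begin

abbreviation "QB \<equiv> replace_sub Q i j B"
abbreviation "S \<equiv> cimg Q \<union> cimg QB"
abbreviation "S1 \<equiv> cimg P \<union> cimg QB"

lemmas bb = bp_basic[OF symE Qiso bp]

lemma hdQB: "hd QB = u" using bb(3) Q by simp
lemma lastQB: "last QB = v" using bb(4) Q by simp

lemma uv_ne: "u \<noteq> v"
proof -
  have ne: "Q \<noteq> []" and dQ: "distinct Q" using Q by (auto simp: gpath_def)
  have "Q ! 0 \<noteq> Q ! (length Q - 1)" using bb(6) nth_eq_iff_index_eq[OF dQ, of 0 "length Q - 1"] by linarith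
  then show ?thesis using Q ne by (simp add: hd_conv_nth last_conv_nth)
qed

lemma B_XQ: "set B \<subseteq> XQ" using bp by (simp add: bypath_def)

lemma Bint: "w \<in> set B \<Longrightarrow> w \<notin> set Q \<Longrightarrow> w \<in> R" using B_XQ by blast

lemma RP: "R \<inter> set P = {}" using reg_disj[OF plP plQ] by simp
lemma RQ: "R \<inter> set Q = {}" using reg_disj[OF plP plQ] by simp

lemma PQB: "set P \<inter> set QB = {u, v}"
proof
  show "set P \<inter> set QB \<subseteq> {u, v}"
  proof
    fix x assume x: "x \<in> set P \<inter> set QB"
    then have "x \<in> set Q \<or> x \<in> set B" using bb(8) by blast
    then show "x \<in> {u, v}"
    proof
      assume "x \<in> set Q" then show ?thesis using x disj by blast
    next
      assume xb: "x \<in> set B"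
      show ?thesis
      proof (cases "x \<in> set Q")
        case True then show ?thesis using x disj by blast
      next
        case False then have "x \<in> R" using Bint xb by blast
        then show ?thesis using RP x by blast
      qed
    qed
  qed
next
  have "u \<in> set QB" "v \<in> set QB" using hdQB lastQB bb(1)
    by (metis gpath_def hd_in_set last_in_set)+
  moreover have "u \<in> set P" "v \<in> set P" using disj by auto
  ultimately show "{u, v} \<subseteq> set P \<inter> set QB" by blast
qed

lemma plQB: "pl QB" using bb(1) gpath_pl by blast
lemma plB: "pl B" using bb(13) gpath_pl by blast

lemma J0: "frontier (outside S0) = S0"
  using jordan2(2)[OF P(1) Q(1) P(2) Q(2) P(3) Q(3) uv_ne disj bb(6)] .

lemma J1: "frontier (inside S1) = S1" "connected (inside S1)"
  using jordan2(1,3)[OF P(1) bb(1) P(2) hdQB P(3) lastQB uv_ne PQB] bb(5) bb(6) by simp_all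

lemma i0: "cimg P \<inter> cimg Q \<subseteq> {pos u, pos v}"
  using int2[OF P(1) Q(1) P(2) Q(2) P(3) Q(3) disj bb(6)] .

lemma i1: "cimg P \<inter> cimg QB \<subseteq> {pos u, pos v}"
  using int2[OF P(1) bb(1) P(2) hdQB P(3) lastQB PQB] bb(5) bb(6) by simp

lemma int_B: "x \<in> set B \<Longrightarrow> x \<noteq> hd B \<Longrightarrow> x \<noteq> last B \<Longrightarrow> x \<in> R"
  using bb(12) Bint by blast

lemma edge_sym_in:
  assumes "E c d" "pl L1" "pl L2" "pos c \<in> inside (cimg L1 \<union> cimg L2) \<or> pos d \<in> inside (cimg L1 \<union> cimg L2)"
  shows "path_image (drw c d) \<subseteq> (cimg L1 \<union> cimg L2) \<union> inside (cimg L1 \<union> cimg L2)"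
  using assms(4)
proof
  assume "pos c \<in> inside (cimg L1 \<union> cimg L2)"
  then show ?thesis using edge_in[OF assms(2,3,1)] by blast
next
  assume "pos d \<in> inside (cimg L1 \<union> cimg L2)"
  moreover have "E d c" using Eprops[OF assms(1)] by simp
  ultimately show ?thesis using edge_in[OF assms(2,3)] img_sym[OF assms(1)] by metis
qed

lemma cB: "cimg B \<subseteq> S0 \<union> inside S0"
proof (rule cimg_within[OF plB])
  fix w assume w: "w \<in> set B"
  show "pos w \<in> S0 \<union> inside S0"
  proof (cases "w \<in> set Q")
    case True then show ?thesis using pos_in_cimg[OF plQ] by blast
  next
    case False then have "w \<in> R" using Bint w by blast
    then show ?thesis by (simp add: region_def)
  qed
next
  fix c d assume cd: "(c, d) \<in> ep B"
  have Ecd: "E c d" using ep_E[OF plB cd] .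
  have "c \<in> R \<or> d \<in> R" using int_edge[OF bb(13) bb(14) cd] int_B by blast
  then have "pos c \<in> inside S0 \<or> pos d \<in> inside S0" by (auto simp: region_def)
  then show "path_image (drw c d) \<subseteq> S0 \<union> inside S0" using edge_sym_in[OF Ecd plP plQ] by blast
qed

lemma cQB: "cimg QB \<subseteq> cimg Q \<union> cimg B"
  using cimg_sub2[OF plQB plQ plB bb(8) bb(10)] .

lemma SS0: "S \<subseteq> S0 \<union> inside S0" using cQB cB by blast
lemma S1S0: "S1 \<subseteq> S0 \<union> inside S0" using cQB cB by blast
lemma clS: "closed S" using closed_cimg[OF plQ] closed_cimg[OF plQB] by blast
lemma clS1: "closed S1" using closed_cimg[OF plP] closed_cimg[OF plQB] by blast

lemma zpt: "\<exists>z. z \<in> cimg P \<and> z \<notin> S"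
proof -
  have neP: "P \<noteq> []" using P by (simp add: gpath_def)
  have lP: "2 \<le> length P"
  proof (cases P)
    case Nil then show ?thesis using neP by simp
  next
    case (Cons a list) then show ?thesis using P uv_ne by (cases list) auto
  qed
  let ?p0 = "P ! 0" and ?p1 = "P ! 1"
  have ep01: "(?p0, ?p1) \<in> ep P" using lP by (auto simp: ep_nth intro!: exI[of _ 0])
  have E01: "E ?p0 ?p1" using ep_E[OF plP ep01] .
  let ?g = "drw ?p0 ?p1"
  have a: "arc ?g" "pathstart ?g = pos ?p0" "pathfinish ?g = pos ?p1"
    "path_image ?g \<inter> pos ` V \<subseteq> {pos ?p0, pos ?p1}" using arc_drw[OF E01] by auto
  have inj: "inj_on ?g {0..1}" using a(1) by (simp add: arc_def)
  define z where "z = ?g (1/2)"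
  have zi: "z \<in> path_image ?g" unfolding z_def path_image_def by auto
  have zP: "z \<in> cimg P" using zi edge_in_cimg[OF plP ep01] by blast
  have z0: "z \<noteq> pos ?p0"
  proof
    assume "z = pos ?p0"
    then have "?g (1/2) = ?g 0" using a(2) z_def by (simp add: pathstart_def)
    then have "(1/2::real) = 0" using inj by (auto dest: inj_onD)
    then show False by simp
  qed
  have z1: "z \<noteq> pos ?p1"
  proof
    assume "z = pos ?p1"
    then have "?g (1/2) = ?g 1" using a(3) z_def by (simp add: pathfinish_def)
    then have "(1/2::real) = 1" using inj by (auto dest: inj_onD)
    then show False by simp
  qed
  have zV: "z \<notin> pos ` V" using a(4) zi z0 z1 by blast
  have "z \<notin> {pos u, pos v}" using zV uv by blast
  then have "z \<notin> S" using i0 i1 zP by blast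
  then show ?thesis using zP by blast
qed

lemma out_B:
  assumes cT: "closed T" and TS: "T \<subseteq> S \<union> inside S" and x: "x \<in> set B" "pos x \<notin> T"
  shows "pos x \<in> outside T"
proof -
  obtain z where z: "z \<in> cimg P" "z \<notin> S" using zpt by blast
  have xS1: "pos x \<in> S1" using pos_in_cimg[OF plQB] bb(9) x(1) by blast
  show ?thesis
    using key_top[OF clS cT clS1 J0 J1(1) J1(2) SS0 S1S0 _ _ _ z(2) TS xS1 x(2)] z(1) by blast
qed

lemma regQQB: "region V pos drw Q QB \<subseteq> R"
proof
  fix x assume x: "x \<in> region V pos drw Q QB"
  then have xV: "x \<in> V" and xi: "pos x \<in> inside S" by (auto simp: region_def)
  have "pos x \<in> S0 \<union> inside S0" using inside_sub[OF SS0] xi by blast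
  moreover have "pos x \<notin> S0"
  proof
    assume x0: "pos x \<in> S0"
    have xnS: "pos x \<notin> S" using xi inside_no_overlap by blast
    have "pos x \<in> outside S" using lemJ[OF clS J0 SS0 x0 xnS] .
    then show False using xi inside_Int_outside by blast
  qed
  ultimately show "x \<in> R" using xV by (simp add: region_def)
qed

lemma regPQB: "region V pos drw P QB \<subseteq> R \<union> set Q"
proof
  fix x assume x: "x \<in> region V pos drw P QB"
  then have xV: "x \<in> V" and xi: "pos x \<in> inside S1" by (auto simp: region_def)
  have "pos x \<in> S0 \<union> inside S0" using inside_sub[OF S1S0] xi by blast
  then show "x \<in> R \<union> set Q"
  proof
    assume x0: "pos x \<in> S0"
    have "x \<notin> set P" using xi pos_in_cimg[OF plP] inside_no_overlap by blast
    moreover have "x \<in> set P \<or> x \<in> set Q" using x0 vert_on[OF plP xV] vert_on[OF plQ xV] by blast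
    ultimately show ?thesis by blast
  next
    assume "pos x \<in> inside S0"
    then show ?thesis using xV by (simp add: region_def)
  qed
qed


lemma QB_XQ: "set QB \<subseteq> XQ" using bb(2) by (simp add: isometric_def)

lemma Y1_XH: "region V pos drw P QB \<union> set P \<union> set QB \<subseteq> XH" using regPQB QB_XQ by blast
lemma Y2_XQ: "region V pos drw Q QB \<union> set Q \<subseteq> XQ" using regQQB by blast
lemma Y3_XQ: "region V pos drw Q QB \<union> set QB \<subseteq> XQ" using regQQB QB_XQ by blast
lemma Y4_XQ: "region V pos drw P QB \<union> set QB \<subseteq> XQ" using regPQB QB_XQ by blast

lemma c1: "isometric V E (region V pos drw P QB \<union> set P \<union> set QB) P"
  by (rule iso_mono[OF symE Piso _ Y1_XH]) blast

lemma c2: "bypath_free V E (region V pos drw P QB \<union> set P \<union> set QB) P"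
  unfolding bypath_free_def
proof
  assume "\<exists>B' a b. bypath V E (region V pos drw P QB \<union> set P \<union> set QB) P B' a b"
  then obtain B' a b where bp': "bypath V E (region V pos drw P QB \<union> set P \<union> set QB) P B' a b" by blast
  note b' = bp_basic[OF symE c1 bp']
  have f: "gpath V E B'" "3 \<le> length B'" "set B' \<subseteq> region V pos drw P QB \<union> set P \<union> set QB"
    "a < b" "b < length P" "hd B' = P ! a" "last B' = P ! b" "set B' \<inter> set P = {P ! a, P ! b}"
    using bp' unfolding bypath_def by auto
  have "isometric V E XH (replace_sub P a b B')"
  proof (rule geo_iso[OF symE b'(1)])
    show "set (replace_sub P a b B') \<subseteq> XH"
      using b'(2) Y1_XH by (auto simp: isometric_def)
    show "length (replace_sub P a b B') - 1 \<le> dist_in E XH (hd (replace_sub P a b B')) (last (replace_sub P a b B'))"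
      using b'(3,4,5) iso_dist[OF Piso] by simp
  qed
  moreover have "set B' \<subseteq> XH" using f(3) Y1_XH by (rule order_trans)
  ultimately have "bypath V E XH P B' a b" using f(1,2,4-8) unfolding bypath_def by blast
  then show False using Pfree unfolding bypath_free_def by blast
qed

lemma c3: "isometric V E (region V pos drw Q QB \<union> set Q) Q"
  by (rule iso_mono[OF symE Qiso _ Y2_XQ]) blast

lemma c5: "isometric V E (region V pos drw P QB \<union> set QB) QB"
  by (rule iso_mono[OF symE bb(2) _ Y4_XQ]) blast

lemma c6: "isometric V E (region V pos drw Q QB \<union> set QB) QB"
  by (rule iso_mono[OF symE bb(2) _ Y3_XQ]) blast

lemma dec:
  assumes bp2: "bypath V E XQ Q B2 a b"
    and hv: "\<And>w. w \<in> set B2 \<Longrightarrow> pos w \<in> S \<union> inside S"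
    and he: "\<And>c d. (c, d) \<in> ep B2 \<Longrightarrow> path_image (drw c d) \<subseteq> S \<union> inside S"
    and w0: "w0 \<in> set B2" "w0 \<in> region V pos drw Q QB"
  shows "card (region V pos drw Q (replace_sub Q a b B2)) < card (region V pos drw Q QB)"
proof -
  let ?Q2 = "replace_sub Q a b B2"
  note b2 = bp_basic[OF symE Qiso bp2]
  have plQ2: "pl ?Q2" using b2(1) gpath_pl by blast
  have plB2: "pl B2" using b2(13) gpath_pl by blast
  let ?T = "cimg Q \<union> cimg ?Q2"
  have cB2: "cimg B2 \<subseteq> S \<union> inside S" using cimg_within[OF plB2] hv he by blast
  have cQ2: "cimg ?Q2 \<subseteq> cimg Q \<union> cimg B2" using cimg_sub2[OF plQ2 plQ plB2 b2(8) b2(10)] .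
  have TS: "?T \<subseteq> S \<union> inside S" using cB2 cQ2 by blast
  have cT: "closed ?T" using closed_cimg[OF plQ] closed_cimg[OF plQ2] by blast
  have iT: "inside ?T \<subseteq> S \<union> inside S" using inside_sub[OF TS] .
  have sub: "region V pos drw Q ?Q2 \<subseteq> region V pos drw Q QB"
  proof
    fix x assume x: "x \<in> region V pos drw Q ?Q2"
    then have xV: "x \<in> V" and xi: "pos x \<in> inside ?T" by (auto simp: region_def)
    have xnT: "pos x \<notin> ?T" using xi inside_no_overlap by blast
    show "x \<in> region V pos drw Q QB"
    proof (cases "pos x \<in> inside S")
      case True then show ?thesis using xV by (simp add: region_def)
    next
      case False
      then have "pos x \<in> S" using iT xi by blast
      then have "x \<in> set Q \<or> x \<in> set QB" using vert_on[OF plQ xV] vert_on[OF plQB xV] by blast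
      moreover have "x \<notin> set Q" using xnT pos_in_cimg[OF plQ] by blast
      ultimately have xB: "x \<in> set B" using bb(8) by blast
      have "pos x \<in> outside ?T" using out_B[OF cT TS xB xnT] .
      then show ?thesis using xi inside_Int_outside by blast
    qed
  qed
  have "w0 \<notin> region V pos drw Q ?Q2"
  proof
    assume "w0 \<in> region V pos drw Q ?Q2"
    then have "pos w0 \<in> inside ?T" by (simp add: region_def)
    moreover have "pos w0 \<in> ?T" using pos_in_cimg[OF plQ2] b2(9) w0(1) by blast
    ultimately show False using inside_no_overlap by blast
  qed
  then have "region V pos drw Q ?Q2 \<subset> region V pos drw Q QB" using sub w0(2) by blast
  then show ?thesis using psubset_card_mono[OF reg_fin] by blast
qed

lemma second_int:
  assumes "gpath V E L" "3 \<le> length L"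
  shows "L ! 1 \<in> set L" "L ! 1 \<noteq> hd L" "L ! 1 \<noteq> last L"
proof -
  have ne: "L \<noteq> []" and dL: "distinct L" using assms(1) by (auto simp: gpath_def)
  note eqi = nth_eq_iff_index_eq[OF dL]
  show "L ! 1 \<in> set L" using assms(2) by simp
  have "L ! 1 \<noteq> L ! 0" using assms(2) eqi[of 1 0] by linarith
  then show "L ! 1 \<noteq> hd L" using ne by (simp add: hd_conv_nth)
  have "L ! 1 \<noteq> L ! (length L - 1)" using assms(2) eqi[of 1 "length L - 1"] by linarith
  then show "L ! 1 \<noteq> last L" using ne by (simp add: last_conv_nth)
qed

lemma regQQB_S: "w \<in> region V pos drw Q QB \<Longrightarrow> pos w \<in> inside S"
  by (simp add: region_def)

lemma smaller_ii:
  assumes "\<not> bypath_free V E (region V pos drw Q QB \<union> set Q) Q"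
  shows "\<exists>B2 a b. bypath V E XQ Q B2 a b \<and> card (region V pos drw Q (replace_sub Q a b B2)) < card (region V pos drw Q QB)"
proof -
  obtain B' a b where bp': "bypath V E (region V pos drw Q QB \<union> set Q) Q B' a b"
    using assms unfolding bypath_free_def by blast
  note b' = bp_basic[OF symE c3 bp']
  have f: "gpath V E B'" "3 \<le> length B'" "set B' \<subseteq> region V pos drw Q QB \<union> set Q"
    "a < b" "b < length Q" "hd B' = Q ! a" "last B' = Q ! b" "set B' \<inter> set Q = {Q ! a, Q ! b}"
    using bp' unfolding bypath_def by auto
  have iso': "isometric V E XQ (replace_sub Q a b B')"
  proof (rule geo_iso[OF symE b'(1)])
    show "set (replace_sub Q a b B') \<subseteq> XQ"
      using b'(2) Y2_XQ by (auto simp: isometric_def)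
    show "length (replace_sub Q a b B') - 1 \<le> dist_in E XQ (hd (replace_sub Q a b B')) (last (replace_sub Q a b B'))"
      using b'(3,4,5) iso_dist[OF Qiso] by simp
  qed
  have sB: "set B' \<subseteq> XQ" using f(3) Y2_XQ by (rule order_trans)
  have bpX: "bypath V E XQ Q B' a b" using f(1,2,4-8) sB iso' unfolding bypath_def by blast
  have intr: "w \<in> region V pos drw Q QB" if "w \<in> set B'" "w \<noteq> hd B'" "w \<noteq> last B'" for w
    using that f(3) b'(12) by blast
  have hv: "pos w \<in> S \<union> inside S" if w: "w \<in> set B'" for w
  proof (cases "w \<in> set Q")
    case True then show ?thesis using pos_in_cimg[OF plQ] by blast
  next
    case False then have "w \<in> region V pos drw Q QB" using f(3) w by blast
    then show ?thesis using regQQB_S by blast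
  qed
  have plB': "pl B'" using f(1) gpath_pl by blast
  have he: "path_image (drw c d) \<subseteq> S \<union> inside S" if cd: "(c, d) \<in> ep B'" for c d
  proof -
    have Ecd: "E c d" using ep_E[OF plB' cd] .
    have "c \<in> region V pos drw Q QB \<or> d \<in> region V pos drw Q QB"
      using int_edge[OF f(1) f(2) cd] intr by blast
    then have "pos c \<in> inside S \<or> pos d \<in> inside S" using regQQB_S by blast
    then show ?thesis using edge_sym_in[OF Ecd plQ plQB] by blast
  qed
  have w0: "B' ! 1 \<in> set B'" "B' ! 1 \<in> region V pos drw Q QB"
    using second_int[OF f(1) f(2)] intr by auto
  show ?thesis using dec[OF bpX hv he w0] bpX by blast
qed

lemma smaller_iii:
  assumes "\<not> bypath_free V E (region V pos drw Q QB \<union> set QB) QB"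
  shows "\<exists>B2 a b. bypath V E XQ Q B2 a b \<and> card (region V pos drw Q (replace_sub Q a b B2)) < card (region V pos drw Q QB)"
proof -
  obtain B' a b where bp': "bypath V E (region V pos drw Q QB \<union> set QB) QB B' a b"
    using assms unfolding bypath_free_def by blast
  note b' = bp_basic[OF symE c6 bp']
  let ?Y = "replace_sub QB a b B'"
  have f: "gpath V E B'" "3 \<le> length B'" "set B' \<subseteq> region V pos drw Q QB \<union> set QB"
    using bp' unfolding bypath_def by auto
  have isoY: "isometric V E XQ ?Y"
  proof (rule geo_iso[OF symE b'(1)])
    show "set ?Y \<subseteq> XQ" using b'(2) Y3_XQ by (auto simp: isometric_def)
    show "length ?Y - 1 \<le> dist_in E XQ (hd ?Y) (last ?Y)"
      using b'(3,4,5) bb(3,4,5) iso_dist[OF Qiso] by simp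
  qed
  have hdY: "hd ?Y = hd Q" using b'(3) bb(3) by simp
  have lastY: "last ?Y = last Q" using b'(4) bb(4) by simp
  have intr: "w \<in> region V pos drw Q QB" if "w \<in> set B'" "w \<noteq> hd B'" "w \<noteq> last B'" for w
    using that f(3) b'(12) by blast
  have RQQ: "region V pos drw Q QB \<inter> set Q = {}" using reg_disj[OF plQ plQB] by simp
  have w0: "B' ! 1 \<in> set B'" "B' ! 1 \<in> region V pos drw Q QB"
    using second_int[OF f(1) f(2)] intr by auto
  have w0Y: "B' ! 1 \<in> set ?Y" using w0(1) b'(9) by blast
  have w0Q: "B' ! 1 \<notin> set Q" using w0(2) RQQ by blast
  obtain B2 a2 b2 where e: "bypath V E XQ Q B2 a2 b2" "B' ! 1 \<in> set B2" "set B2 \<subseteq> set ?Y" "ep B2 \<subseteq> ep ?Y"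
    using ext[OF symE Qiso isoY hdY lastY w0Y w0Q] by blast
  have hv: "pos w \<in> S \<union> inside S" if w: "w \<in> set B2" for w
  proof -
    have "w \<in> set QB \<or> w \<in> set B'" using w e(3) b'(8) by blast
    then have "w \<in> set QB \<or> w \<in> region V pos drw Q QB" using f(3) by blast
    then show ?thesis using pos_in_cimg[OF plQB] regQQB_S by blast
  qed
  have plB': "pl B'" using f(1) gpath_pl by blast
  have he: "path_image (drw c d) \<subseteq> S \<union> inside S" if cd: "(c, d) \<in> ep B2" for c d
  proof -
    have "(c, d) \<in> ep QB \<or> (c, d) \<in> ep B'" using cd e(4) b'(10) by blast
    then show ?thesis
    proof
      assume "(c, d) \<in> ep QB"
      then show ?thesis using edge_in_cimg[OF plQB] by blast
    next
      assume cd': "(c, d) \<in> ep B'"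
      have Ecd: "E c d" using ep_E[OF plB' cd'] .
      have "c \<in> region V pos drw Q QB \<or> d \<in> region V pos drw Q QB"
        using int_edge[OF f(1) f(2) cd'] intr by blast
      then have "pos c \<in> inside S \<or> pos d \<in> inside S" using regQQB_S by blast
      then show ?thesis using edge_sym_in[OF Ecd plQ plQB] by blast
    qed
  qed
  show ?thesis using dec[OF e(1) hv he e(2) w0(2)] e(1) by blast
qed

end

theorem lemma4p3:
  fixes V :: "'v set" and E :: "'v \<Rightarrow> 'v \<Rightarrow> bool"
    and pos :: "'v \<Rightarrow> complex" and drw :: "'v \<Rightarrow> 'v \<Rightarrow> real \<Rightarrow> complex"
    and u v :: 'v and P Q :: "'v list"
  assumes G: "plane_graph V E pos drw"
    and uv: "u \<in> V" "v \<in> V"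
    and P: "gpath V E P" "hd P = u" "last P = v"
    and Q: "gpath V E Q" "hd Q = u" "last Q = v"
    and disj: "set P \<inter> set Q = {u, v}"
    and Piso: "isometric V E (region V pos drw P Q \<union> set P \<union> set Q) P"
    and Pfree: "bypath_free V E (region V pos drw P Q \<union> set P \<union> set Q) P"
    and Qiso: "isometric V E (region V pos drw P Q \<union> set Q) Q"
  shows "bypath_free V E (region V pos drw P Q \<union> set Q) Q \<or>
    (\<exists>B i j. bypath V E (region V pos drw P Q \<union> set Q) Q B i j \<and>
       (let QB = replace_sub Q i j B in
          isometric V E (region V pos drw P QB \<union> set P \<union> set QB) P \<and>
          bypath_free V E (region V pos drw P QB \<union> set P \<union> set QB) P \<and>
          isometric V E (region V pos drw Q QB \<union> set Q) Q \<and>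
          bypath_free V E (region V pos drw Q QB \<union> set Q) Q \<and>
          isometric V E (region V pos drw P QB \<union> set QB) QB \<and>
          isometric V E (region V pos drw Q QB \<union> set QB) QB \<and>
          bypath_free V E (region V pos drw Q QB \<union> set QB) QB))"
proof -
  have st: "setting V E pos drw u v P Q"
    unfolding setting_def setting_axioms_def pg_def using G uv P Q disj Piso Pfree Qiso by blast
  let ?XQ = "region V pos drw P Q \<union> set Q"
  show ?thesis
  proof (cases "bypath_free V E ?XQ Q")
    case True then show ?thesis by blast
  next
    case False
    then obtain B0 i0 j0 where b0: "bypath V E ?XQ Q B0 i0 j0" unfolding bypath_free_def by blast
    define PP where "PP = (\<lambda>t. case t of (B, i, j) \<Rightarrow> bypath V E ?XQ Q B i j)"
    define mm where "mm = (\<lambda>t. case t of (B, i, j) \<Rightarrow> card (region V pos drw Q (replace_sub Q i j B)))"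
    have "PP (B0, i0, j0)" using b0 PP_def by simp
    then obtain t where t: "PP t" and tmin: "\<And>y. PP y \<Longrightarrow> mm t \<le> mm y"
      using ex_has_least_nat[of PP "(B0, i0, j0)" mm] by blast
    obtain B i j where tt: "t = (B, i, j)" by (cases t) auto
    have bpB: "bypath V E ?XQ Q B i j" using t tt PP_def by simp
    have minimal: "card (region V pos drw Q (replace_sub Q i j B)) \<le> card (region V pos drw Q (replace_sub Q a b B2))"
      if "bypath V E ?XQ Q B2 a b" for B2 a b
      using tmin[of "(B2, a, b)"] that tt PP_def mm_def by simp
    have bs: "bsetting V E pos drw u v P Q B i j"
      unfolding bsetting_def bsetting_axioms_def using st bpB by blast
    interpret b: bsetting V E pos drw u v P Q B i j by (rule bs)
    have c4: "bypath_free V E (region V pos drw Q (replace_sub Q i j B) \<union> set Q) Q"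
    proof (rule ccontr)
      assume "\<not> bypath_free V E (region V pos drw Q (replace_sub Q i j B) \<union> set Q) Q"
      then obtain B2 a b where "bypath V E ?XQ Q B2 a b"
        "card (region V pos drw Q (replace_sub Q a b B2)) < card (region V pos drw Q (replace_sub Q i j B))"
        using b.smaller_ii by blast
      then show False using minimal by fastforce
    qed
    have c7: "bypath_free V E (region V pos drw Q (replace_sub Q i j B) \<union> set (replace_sub Q i j B)) (replace_sub Q i j B)"
    proof (rule ccontr)
      assume "\<not> bypath_free V E (region V pos drw Q (replace_sub Q i j B) \<union> set (replace_sub Q i j B)) (replace_sub Q i j B)"
      then obtain B2 a b where "bypath V E ?XQ Q B2 a b"
        "card (region V pos drw Q (replace_sub Q a b B2)) < card (region V pos drw Q (replace_sub Q i j B))"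
        using b.smaller_iii by blast
      then show False using minimal by fastforce
    qed
    have "bypath V E ?XQ Q B i j \<and>
       (let QB = replace_sub Q i j B in
          isometric V E (region V pos drw P QB \<union> set P \<union> set QB) P \<and>
          bypath_free V E (region V pos drw P QB \<union> set P \<union> set QB) P \<and>
          isometric V E (region V pos drw Q QB \<union> set Q) Q \<and>
          bypath_free V E (region V pos drw Q QB \<union> set Q) Q \<and>
          isometric V E (region V pos drw P QB \<union> set QB) QB \<and>
          isometric V E (region V pos drw Q QB \<union> set QB) QB \<and>
          bypath_free V E (region V pos drw Q QB \<union> set QB) QB)"
      unfolding Let_def using bpB b.c1 b.c2 b.c3 c4 b.c5 b.c6 c7 by blast
    then show ?thesis by blast
  qed
qed

end
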